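(* Consider a stationary memoryless source over a $D$-ary alphabet ($D\ge2$) whose symbol probability mass function has minimal mass $p_{\min}>0$, let $\rho:=1/p_{\min}$, let $P_\ell$ be the probability mass function induced on the $n$ leaves of a Tunstall tree with $n$ leaves, and for $\omega\in(0,1)$ let $d_{\omega,n}(P_\ell):=D_{\phi_\omega}(P_\ell\|U_n)$. Then: (a) $d_{\omega,n}(P_\ell)$ is the minimum of $D_{\phi_\omega}(P\|U_n)$ over all probability measures $P$ induced on the leaves by an arbitrary $D$-ary parsing tree with $n$ leaves for the same source; (b) $d_{\omega,n}(P_\ell)\le\max_{\beta\in\Gamma_n(\rho)}D_{\phi_\omega}(Q_\beta\|U_n)$; (c) for every $n\in\mathbb N$, $d_{\omega,n}(P_\ell)\le\max_{x\in[0,1]}\Big\{x\,\phi_\omega\big(\frac{\rho}{1+(\rho-1)x}\big)+(1-x)\,\phi_\omega\big(\frac1{1+(\rho-1)x}\big)\Big\}$, which equals the $n\to\infty$ limit of the bound in (b); (d) if $f:(0,\infty)\to\mathbb R$ is convex, twice differentiable, continuous at zero, with $f(1)=0$, then $D_f(P_\ell\|U_n)=\int_0^1\frac{d_{\omega,n}(P_\ell)}{\omega^3}f''\big(\frac{1-\omega}{\omega}\big)\,d\omega$.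
   Context: A $D$-ary parsing tree is a complete $D$-ary tree; a leaf at the end of the path $s_1\cdots s_k$ of source symbols gets probability $\prod_jP(s_j)$, giving a probability mass function on the leaves. A Tunstall tree with $n$ leaves is obtained from the single root by repeatedly expanding a leaf of currently maximal probability into its $D$ children. $U_n$ is uniform on $n$ points. $\phi_\omega(t):=\min\{\omega,1-\omega\}-\min\{\omega,1-\omega t\}$, $t\ge0$, and $D_f(P\|Q)=\sum_xQ(x)f(P(x)/Q(x))$. For $\rho>1$: $\Gamma_n(\rho):=[\frac1{1+(n-1)\rho},\frac1n]$, and for $\beta\in\Gamma_n(\rho)$, $i_\beta:=\lfloor\frac{1-n\beta}{(\rho-1)\beta}\rfloor$, $Q_\beta(j)=\rho\beta$ for $j\le i_\beta$, $Q_\beta(i_\beta+1)=1-(n+i_\beta(\rho-1)-1)\beta$, $Q_\beta(j)=\beta$ for $i_\beta+2\le j\le n$. *)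

theory Defs
  imports "HOL-Analysis.Analysis"
begin

text \<open>A D-ary parsing tree is represented by its set of leaves (words). Complete D-ary trees are
exactly those obtained from the root by repeatedly expanding a leaf into its D children.\<close>

inductive_set parsing_trees :: "nat \<Rightarrow> nat list set set" for D :: nat where
  root: "{[]} \<in> parsing_trees D"
| expand: "L \<in> parsing_trees D \<Longrightarrow> w \<in> L \<Longrightarrow>
     (L - {w}) \<union> (\<lambda>s. w @ [s]) ` {..<D} \<in> parsing_trees D"

definition word_prob :: "(nat \<Rightarrow> real) \<Rightarrow> nat list \<Rightarrow> real" where
  "word_prob p w = prod_list (map p w)"

inductive_set tunstall_trees :: "nat \<Rightarrow> (nat \<Rightarrow> real) \<Rightarrow> nat list set set"
  for D :: nat and p :: "nat \<Rightarrow> real" where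
  root: "{[]} \<in> tunstall_trees D p"
| expand: "L \<in> tunstall_trees D p \<Longrightarrow> w \<in> L \<Longrightarrow>
     (\<forall>v\<in>L. word_prob p v \<le> word_prob p w) \<Longrightarrow>
     (L - {w}) \<union> (\<lambda>s. w @ [s]) ` {..<D} \<in> tunstall_trees D p"

definition phi :: "real \<Rightarrow> real \<Rightarrow> real" where
  "phi \<omega> t = min \<omega> (1 - \<omega>) - min \<omega> (1 - \<omega> * t)"

text \<open>f-divergence D_f(P || U_n) of a pmf P on the finite set A (n = card A) from the uniform
distribution on A: sum over x of (1/n) f(P x / (1/n)).\<close>
definition fdiv_unif :: "(real \<Rightarrow> real) \<Rightarrow> 'a set \<Rightarrow> ('a \<Rightarrow> real) \<Rightarrow> real" where
  "fdiv_unif f A P = (\<Sum>x\<in>A. (1 / real (card A)) * f (P x * real (card A)))"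

definition Gamma :: "nat \<Rightarrow> real \<Rightarrow> real set" where
  "Gamma n \<rho> = {1 / (1 + (real n - 1) * \<rho>) .. 1 / real n}"

definition i_beta :: "real \<Rightarrow> nat \<Rightarrow> real \<Rightarrow> nat" where
  "i_beta \<rho> n \<beta> = nat \<lfloor>(1 - real n * \<beta>) / ((\<rho> - 1) * \<beta>)\<rfloor>"

text \<open>Q_beta as a pmf on {1..n}.\<close>
definition Q_beta :: "real \<Rightarrow> nat \<Rightarrow> real \<Rightarrow> nat \<Rightarrow> real" where
  "Q_beta \<rho> n \<beta> j =
     (let i = i_beta \<rho> n \<beta> in
      if j \<le> i then \<rho> * \<beta>
      else if j = i + 1 then 1 - (real n + real i * (\<rho> - 1) - 1) * \<beta>
      else \<beta>)"

definition bound_b :: "real \<Rightarrow> real \<Rightarrow> nat \<Rightarrow> real" where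
  "bound_b \<omega> \<rho> n = Sup ((\<lambda>\<beta>. fdiv_unif (phi \<omega>) {1..n} (Q_beta \<rho> n \<beta>)) ` Gamma n \<rho>)"

definition bound_c :: "real \<Rightarrow> real \<Rightarrow> real" where
  "bound_c \<omega> \<rho> = Sup ((\<lambda>x. x * phi \<omega> (\<rho> / (1 + (\<rho> - 1) * x))
                         + (1 - x) * phi \<omega> (1 / (1 + (\<rho> - 1) * x))) ` {0..1})"

end

theory Submission
  imports Defs
begin


definition spre :: "'a list \<Rightarrow> 'a list \<Rightarrow> bool" where
  "spre u x \<longleftrightarrow> (\<exists>z. z \<noteq> [] \<and> x = u @ z)"
definition pre :: "'a list \<Rightarrow> 'a list \<Rightarrow> bool" where
  "pre u x \<longleftrightarrow> (\<exists>z. x = u @ z)"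
definition internal :: "'a list set \<Rightarrow> 'a list set" where
  "internal L = {u. \<exists>x\<in>L. spre u x}"

lemma word_prob_append: "word_prob p (xs @ ys) = word_prob p xs * word_prob p ys"
  by (simp add: word_prob_def)
lemma word_prob_Nil[simp]: "word_prob p [] = 1" by (simp add: word_prob_def)
lemma word_prob_snoc: "word_prob p (xs @ [s]) = word_prob p xs * p s"
  by (simp add: word_prob_def)

lemma snoc_split: assumes "w @ [s] = u @ z" "z \<noteq> []"
  shows "\<exists>z'. z = z' @ [s] \<and> w = u @ z'"
proof -
  obtain z' s' where zz: "z = z' @ [s']" using assms(2) by (cases z rule: rev_cases) auto
  hence "w @ [s] = (u @ z') @ [s']" using assms(1) by simp
  hence "w = u @ z'" "s = s'" by simp_all
  thus ?thesis using zz by blast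
qed

lemma finite_internal: assumes "finite L" shows "finite (internal L)"
proof -
  have "internal L \<subseteq> (\<Union>x\<in>L. (\<lambda>k. take k x) ` {..length x})"
  proof
    fix u assume "u \<in> internal L"
    then obtain x z where xz: "x \<in> L" "x = u @ z" unfolding internal_def spre_def by blast
    hence "u = take (length u) x" "length u \<le> length x" by simp_all
    thus "u \<in> (\<Union>x\<in>L. (\<lambda>k. take k x) ` {..length x})" using xz(1) by blast
  qed
  moreover have "finite (\<Union>x\<in>L. (\<lambda>k. take k x) ` {..length x})" using assms by simp
  ultimately show ?thesis by (rule finite_subset)

qed

locale src =
  fixes D :: nat and p :: "nat \<Rightarrow> real"
  assumes D2: "D \<ge> 2" and ppos: "\<forall>i<D. p i > 0" and psum: "(\<Sum>i<D. p i) = 1"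
begin

abbreviation "P \<equiv> word_prob p"

lemma p_le1: "i < D \<Longrightarrow> p i \<le> 1"
proof -
  assume i: "i < D"
  have "p i \<le> (\<Sum>j<D. p j)"
    using i ppos by (intro member_le_sum) (auto intro: less_imp_le)
  thus ?thesis using psum by simp
qed

lemma P_bounds: "set w \<subseteq> {..<D} \<Longrightarrow> 0 < P w \<and> P w \<le> 1"
proof (induction w)
  case Nil thus ?case by simp
next
  case (Cons a w)
  hence a: "a < D" and IH: "0 < P w \<and> P w \<le> 1" by auto
  have "P (a # w) = p a * P w" by (simp add: word_prob_def)
  moreover have "0 < p a" "p a \<le> 1" using a ppos p_le1 by auto
  ultimately show ?case using IH by (simp add: mult_le_one)
qed

definition Delta :: "real \<Rightarrow> real \<Rightarrow> real" where
  "Delta c a = max 0 (a - c) - (\<Sum>s<D. max 0 (a * p s - c))"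

definition tinv :: "nat list set \<Rightarrow> bool" where
  "tinv L \<longleftrightarrow> finite L \<and> (\<forall>x\<in>L. set x \<subseteq> {..<D}) \<and> (\<forall>x\<in>L. \<forall>y\<in>L. \<not> spre x y)
    \<and> (\<forall>v. set v \<subseteq> {..<D} \<longrightarrow> v \<in> internal L \<or> (\<exists>x\<in>L. pre x v))
    \<and> card L = 1 + (D - 1) * card (internal L) \<and> sum P L = 1
    \<and> (\<forall>c. (\<Sum>x\<in>L. max 0 (P x - c)) = max 0 (1 - c) - (\<Sum>v\<in>internal L. Delta c (P v)))"

lemma internal_expand:
  assumes "w \<in> L"
  shows "internal ((L - {w}) \<union> (\<lambda>s. w @ [s]) ` {..<D}) = insert w (internal L)"
proof -
  have D0: "0 < D" using D2 by simp
  show ?thesis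
  proof (rule set_eqI, rule iffI)
    fix u assume "u \<in> internal ((L - {w}) \<union> (\<lambda>s. w @ [s]) ` {..<D})"
    then obtain x z where x: "x \<in> (L - {w}) \<union> (\<lambda>s. w @ [s]) ` {..<D}" "z \<noteq> []" "x = u @ z"
      unfolding internal_def spre_def by auto
    show "u \<in> insert w (internal L)"
    proof (cases "x \<in> L - {w}")
      case True thus ?thesis using x unfolding internal_def spre_def by auto
    next
      case False
      then obtain s where xs: "x = w @ [s]" using x(1) by blast
      have wsuz: "w @ [s] = u @ z" using xs x(3) by simp

      obtain z' where "z = z' @ [s]" "w = u @ z'" using snoc_split[OF wsuz x(2)] by blast
      show ?thesis
      proof (cases "z' = []")
        case True thus ?thesis using \<open>w = u @ z'\<close> by simp
      next
        case False
        hence "u \<in> internal L" using assms \<open>w = u @ z'\<close> unfolding internal_def spre_def by blast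
        thus ?thesis by simp
      qed

    qed
  next
    fix u assume u: "u \<in> insert w (internal L)"
    show "u \<in> internal ((L - {w}) \<union> (\<lambda>s. w @ [s]) ` {..<D})"
    proof (cases "u = w")
      case True
      have "w @ [0] \<in> (\<lambda>s. w @ [s]) ` {..<D}" using D0 by auto
      thus ?thesis using True unfolding internal_def spre_def by blast
    next
      case False
      then obtain x z where x: "x \<in> L" "z \<noteq> []" "x = u @ z"
        using u unfolding internal_def spre_def by auto
      show ?thesis
      proof (cases "x = w")
        case False thus ?thesis using x unfolding internal_def spre_def by blast
      next
        case True
        have "w @ [0] \<in> (\<lambda>s. w @ [s]) ` {..<D}" using D0 by auto
        moreover have "w @ [0] = u @ (z @ [0])" using x True by simp
        ultimately show ?thesis unfolding internal_def spre_def by blast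
      qed
    qed
  qed
qed

lemma inv_root: "tinv {[]}"
proof -
  have "internal {[]} = {}" unfolding internal_def spre_def by auto
  moreover have "\<forall>v. (\<exists>x\<in>{[]}. pre x v)" unfolding pre_def by auto
  ultimately show ?thesis unfolding tinv_def spre_def by auto
qed

lemma inv_expand:
  assumes inv: "tinv L" and w: "w \<in> L"
  shows "tinv ((L - {w}) \<union> (\<lambda>s. w @ [s]) ` {..<D})"
proof -
  define C where "C = (\<lambda>s. w @ [s]) ` {..<D}"
  define L' where "L' = (L - {w}) \<union> C"
  have fin: "finite L" and words: "\<forall>x\<in>L. set x \<subseteq> {..<D}"
    and pf: "\<forall>x\<in>L. \<forall>y\<in>L. \<not> spre x y"
    and compl: "\<forall>v. set v \<subseteq> {..<D} \<longrightarrow> v \<in> internal L \<or> (\<exists>x\<in>L. pre x v)"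
    and cardL: "card L = 1 + (D - 1) * card (internal L)" and sumL: "sum P L = 1"
    and maxL: "\<forall>c. (\<Sum>x\<in>L. max 0 (P x - c)) = max 0 (1 - c) - (\<Sum>v\<in>internal L. Delta c (P v))"
    using inv unfolding tinv_def by auto
  have int': "internal L' = insert w (internal L)" unfolding L'_def C_def using internal_expand w by simp
  have wni: "w \<notin> internal L" using pf w unfolding internal_def by auto
  have inj: "inj_on (\<lambda>s. w @ [s]) {..<D}" by (auto simp: inj_on_def)
  have cardC: "card C = D" unfolding C_def using inj by (simp add: card_image)
  have disj: "(L - {w}) \<inter> C = {}"
  proof -
    { fix s assume "w @ [s] \<in> L"
      moreover have "w @ [s] = w @ [s]" ..
      ultimately have False using pf w unfolding spre_def by blast }
    thus ?thesis unfolding C_def by auto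
  qed
  have finC: "finite C" unfolding C_def by simp
  have finint: "finite (internal L)" using finite_internal fin by blast
  have sumC: "\<And>f. sum f C = (\<Sum>s<D. f (w @ [s]))"
    unfolding C_def using inj by (simp add: sum.reindex)
  have sum_split: "\<And>f :: nat list \<Rightarrow> real. sum f L' = sum f L - f w + sum f C"
  proof -
    fix f :: "nat list \<Rightarrow> real"
    have "sum f L' = sum f (L - {w}) + sum f C"
      unfolding L'_def using disj fin finC by (simp add: sum.union_disjoint)
    also have "sum f (L - {w}) = sum f L - f w" using fin w by (simp add: sum_diff1)
    finally show "sum f L' = sum f L - f w + sum f C" .
  qed
  have f1: "finite L'" unfolding L'_def using fin finC by simp
  have f2: "\<forall>x\<in>L'. set x \<subseteq> {..<D}"
  proof
    fix x assume "x \<in> L'"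
    moreover have "set w \<subseteq> {..<D}" using words w by blast
    ultimately show "set x \<subseteq> {..<D}" unfolding L'_def C_def using words by auto
  qed

  have f3: "\<forall>x\<in>L'. \<forall>y\<in>L'. \<not> spre x y"
  proof (intro ballI notI)
    fix x y assume x: "x \<in> L'" and y: "y \<in> L'" and s: "spre x y"
    then obtain z where z: "z \<noteq> []" "y = x @ z" unfolding spre_def by auto
    show False
    proof (cases "x \<in> C")
      case True
      then obtain a where a: "x = w @ [a]" unfolding C_def by auto
      show False
      proof (cases "y \<in> C")
        case True
        then obtain b where "y = w @ [b]" unfolding C_def by auto
        hence "length y = length x" using a by simp
        thus False using z by simp
      next
        case False
        hence "y \<in> L" "y \<noteq> w" using y unfolding L'_def by auto
        moreover have "y = w @ ([a] @ z)" using z a by simp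
        ultimately show False using pf w unfolding spre_def by blast
      qed
    next
      case False
      hence xL: "x \<in> L" "x \<noteq> w" using x unfolding L'_def by auto
      show False
      proof (cases "y \<in> C")
        case True
        then obtain b where b: "y = w @ [b]" unfolding C_def by auto
        hence "w @ [b] = x @ z" using z by simp
        note snoc_split[OF this z(1)]
        then obtain z' where "w = x @ z'" by blast
        moreover have "z' \<noteq> []" using xL calculation by auto
        ultimately show False using xL pf w unfolding spre_def by blast
      next
        case False
        hence "y \<in> L" using y unfolding L'_def by auto
        thus False using pf xL s by blast
      qed
    qed
  qed
  have f4: "\<forall>v. set v \<subseteq> {..<D} \<longrightarrow> v \<in> internal L' \<or> (\<exists>x\<in>L'. pre x v)"
  proof (intro allI impI)
    fix v :: "nat list" assume sv: "set v \<subseteq> {..<D}"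
    show "v \<in> internal L' \<or> (\<exists>x\<in>L'. pre x v)"
    proof (cases "v \<in> internal L")
      case True thus ?thesis using int' by simp
    next
      case False
      then obtain x where x: "x \<in> L" "pre x v" using compl sv by blast
      then obtain z where z: "v = x @ z" unfolding pre_def by auto
      show ?thesis
      proof (cases "x = w")
        case False thus ?thesis using x unfolding L'_def by auto
      next
        case True
        show ?thesis
        proof (cases z)
          case Nil thus ?thesis using int' z True by simp
        next
          case (Cons s z')
          have "s < D" using sv z Cons by auto
          hence "w @ [s] \<in> L'" unfolding L'_def C_def by auto
          moreover have "pre (w @ [s]) v" unfolding pre_def using z Cons True by simp
          ultimately show ?thesis by blast
        qed
      qed
    qed
  qed
  have f5: "card L' = 1 + (D - 1) * card (internal L')"
  proof -
    have "card L' = card (L - {w}) + card C"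
      unfolding L'_def using disj fin finC by (simp add: card_Un_disjoint)
    also have "card (L - {w}) = card L - 1" using w fin by simp
    finally have "card L' = card L - 1 + D" using cardC by simp
    moreover have "card (internal L') = card (internal L) + 1" using int' wni finint by simp
    moreover obtain d where dD: "D = Suc d" using D2 by (cases D) auto
    ultimately show ?thesis using cardL by simp

  qed
  have f6: "sum P L' = 1"
  proof -
    have "sum P C = (\<Sum>s<D. P w * p s)" unfolding sumC[of P] by (simp add: word_prob_snoc)
    also have "\<dots> = P w" using psum by (simp add: sum_distrib_left[symmetric])
    finally show ?thesis using sum_split sumL by simp
  qed
  have f7: "\<forall>c. (\<Sum>x\<in>L'. max 0 (P x - c)) = max 0 (1 - c) - (\<Sum>v\<in>internal L'. Delta c (P v))"
  proof
    fix c
    have "(\<Sum>x\<in>L'. max 0 (P x - c)) = (\<Sum>x\<in>L. max 0 (P x - c)) - max 0 (P w - c)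
          + (\<Sum>s<D. max 0 (P w * p s - c))"
      using sum_split[of "\<lambda>x. max 0 (P x - c)"] sumC[of "\<lambda>x. max 0 (P x - c)"] by (simp add: word_prob_snoc)
    also have "\<dots> = (\<Sum>x\<in>L. max 0 (P x - c)) - Delta c (P w)" unfolding Delta_def by simp
    also have "\<dots> = max 0 (1 - c) - (\<Sum>v\<in>internal L'. Delta c (P v))"
      using maxL int' wni finint by simp
    finally show "(\<Sum>x\<in>L'. max 0 (P x - c)) = max 0 (1 - c) - (\<Sum>v\<in>internal L'. Delta c (P v))" .
  qed
  have "tinv L'" unfolding tinv_def by (intro conjI f1 f2 f3 f4 f5 f6 f7)
  thus ?thesis unfolding L'_def C_def .

qed

lemma inv_parsing: "L \<in> parsing_trees D \<Longrightarrow> tinv L"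
  by (induction rule: parsing_trees.induct) (auto intro: inv_root inv_expand)

lemma tunstall_parsing: "L \<in> tunstall_trees D p \<Longrightarrow> L \<in> parsing_trees D"
  by (induction rule: tunstall_trees.induct) (auto intro: parsing_trees.intros)

end


lemma sum_mono_compare:
  fixes h :: "real \<Rightarrow> real" and P :: "'a \<Rightarrow> real"
  assumes fI: "finite I" and fJ: "finite J" and cd: "card I = card J"
    and mono: "\<And>x y. x \<le> y \<Longrightarrow> h x \<le> h y"
    and J: "\<forall>v\<in>J. q \<le> P v" and I: "\<forall>v\<in>I - J. P v \<le> q"
  shows "(\<Sum>v\<in>I. h (P v)) \<le> (\<Sum>v\<in>J. h (P v))"
proof -
  have c1: "card (I - J) = card (J - I)"
  proof -
    have "card (I - J) = card I - card (I \<inter> J)" using fI by (simp add: card_Diff_subset_Int Diff_Int2)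
    moreover have "card (J - I) = card J - card (I \<inter> J)" using fJ
      by (metis Diff_Int2 card_Diff_subset_Int finite_Int inf_commute)
    ultimately show ?thesis using cd by simp
  qed
  have s1: "(\<Sum>v\<in>I. h (P v)) = (\<Sum>v\<in>I \<inter> J. h (P v)) + (\<Sum>v\<in>I - J. h (P v))"
    using fI by (metis sum.Int_Diff)
  have s2: "(\<Sum>v\<in>J. h (P v)) = (\<Sum>v\<in>I \<inter> J. h (P v)) + (\<Sum>v\<in>J - I. h (P v))"
    using fJ by (metis sum.Int_Diff inf_commute)
  have "(\<Sum>v\<in>I - J. h (P v)) \<le> (\<Sum>v\<in>I - J. h q)" using I mono by (intro sum_mono) auto
  also have "\<dots> = (\<Sum>v\<in>J - I. h q)" using c1 by simp
  also have "\<dots> \<le> (\<Sum>v\<in>J - I. h (P v))" using J mono by (intro sum_mono) auto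
  finally show ?thesis using s1 s2 by simp
qed

lemma phi_rep:
  fixes \<omega> n v :: real
  assumes "0 < \<omega>" "0 < n"
  shows "1 / n * phi \<omega> (v * n) = (min \<omega> (1 - \<omega>) - \<omega>) / n + \<omega> * max 0 (v - (1 - \<omega>) / (\<omega> * n))"
proof -
  define c where "c = (1 - \<omega>) / (\<omega> * n)"
  have key: "\<omega> - 1 + \<omega> * (v * n) = \<omega> * n * (v - c)"
    unfolding c_def using assms by (simp add: field_simps)
  have "min \<omega> (1 - \<omega> * (v * n)) = \<omega> - \<omega> * n * max 0 (v - c)"
  proof (cases "v \<le> c")
    case True
    hence "\<omega> * n * (v - c) \<le> 0" using assms by (simp add: mult_nonneg_nonpos)
    thus ?thesis using key True by (simp add: min_def max_def)
  next
    case False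
    hence "\<omega> * n * (v - c) > 0" using assms by simp
    thus ?thesis using key False by (simp add: min_def max_def algebra_simps)
  qed
  hence "phi \<omega> (v * n) = min \<omega> (1 - \<omega>) - \<omega> + \<omega> * n * max 0 (v - c)"
    unfolding phi_def by simp
  thus ?thesis using assms unfolding c_def by (simp add: field_simps)
qed

context src begin

definition pmin where "pmin = Min (p ` {..<D})"

lemma pmin_props: "0 < pmin" "\<And>i. i < D \<Longrightarrow> pmin \<le> p i" "pmin < 1"
proof -
  have "0 \<in> {..<D}" using D2 by simp
  hence ne: "p ` {..<D} \<noteq> {}" by blast
  show "0 < pmin" unfolding pmin_def using ne ppos by (subst Min_gr_iff) auto
  show "\<And>i. i < D \<Longrightarrow> pmin \<le> p i" unfolding pmin_def by (intro Min_le) auto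
  have "p 0 + p 1 \<le> (\<Sum>i<D. p i)"
  proof -
    have "(\<Sum>i\<in>{0,1}. p i) \<le> (\<Sum>i<D. p i)"
      using D2 ppos by (intro sum_mono2) (auto intro: less_imp_le)
    thus ?thesis by simp
  qed
  moreover have "0 < p 1" using ppos D2 by simp
  ultimately have "p 0 < 1" using psum by simp
  moreover have "pmin \<le> p 0" unfolding pmin_def using D2 by (intro Min_le) auto
  ultimately show "pmin < 1" by simp
qed

lemma tun_inv:
  assumes "L \<in> tunstall_trees D p"
  shows "\<exists>q. (\<forall>v\<in>internal L. q \<le> P v) \<and> (\<forall>x\<in>L. pmin * q \<le> P x \<and> P x \<le> q)"
  using assms
proof (induction rule: tunstall_trees.induct)
  case root
  have "internal {[]} = {}" unfolding internal_def spre_def by auto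
  thus ?case using pmin_props by (intro exI[of _ 1]) auto
next
  case (expand L w)
  from expand.IH obtain q where q1: "\<forall>v\<in>internal L. q \<le> P v" and q2: "\<forall>x\<in>L. pmin * q \<le> P x \<and> P x \<le> q"
    by blast
  have inv: "tinv L" using expand(1) tunstall_parsing inv_parsing by blast
  hence pf: "\<forall>x\<in>L. \<forall>y\<in>L. \<not> spre x y" and words: "\<forall>x\<in>L. set x \<subseteq> {..<D}"
    unfolding tinv_def by auto
  have int': "internal ((L - {w}) \<union> (\<lambda>s. w @ [s]) ` {..<D}) = insert w (internal L)"
    using internal_expand expand.hyps(2) by simp
  have wq: "P w \<le> q" using q2 expand.hyps(2) by auto
  have Pw: "0 < P w" using P_bounds words expand.hyps(2) by blast
  have A: "\<forall>v\<in>internal ((L - {w}) \<union> (\<lambda>s. w @ [s]) ` {..<D}). P w \<le> P v"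
    using int' q1 wq by auto
  have B: "\<forall>x\<in>(L - {w}) \<union> (\<lambda>s. w @ [s]) ` {..<D}. pmin * P w \<le> P x \<and> P x \<le> P w"
  proof
    fix x assume x: "x \<in> (L - {w}) \<union> (\<lambda>s. w @ [s]) ` {..<D}"

    show "pmin * P w \<le> P x \<and> P x \<le> P w"
    proof (cases "x \<in> L - {w}")
      case True
      have "pmin * P w \<le> pmin * q" using wq pmin_props(1) by simp
      thus ?thesis using True q2 expand.hyps(3) by force
    next
      case False
      then obtain s where s: "s < D" "x = w @ [s]" using x by auto
      have "pmin \<le> p s" "p s \<le> 1" using s pmin_props p_le1 by auto
      thus ?thesis using s Pw by (simp add: word_prob_snoc mult_left_le mult_right_mono)
    qed
  qed
  show ?case using A B by blast
qed

lemma Delta_mono: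
  assumes c: "0 < c" and ab: "0 \<le> a" "a \<le> b"
  shows "Delta c a \<le> Delta c b"
proof -
  define S where "S = {s. s < D \<and> c < b * p s}"
  have pnn: "\<And>s. s < D \<Longrightarrow> 0 \<le> p s" using ppos less_imp_le by blast
  have finS: "finite S" unfolding S_def by simp
  have SD: "S \<subseteq> {..<D}" unfolding S_def by auto
  have zero: "\<And>s. s \<in> {..<D} - S \<Longrightarrow> max 0 (b * p s - c) - max 0 (a * p s - c) = 0"
  proof -
    fix s assume s: "s \<in> {..<D} - S"
    hence "b * p s \<le> c" "a * p s \<le> b * p s" using pnn ab unfolding S_def by (auto intro: mult_right_mono)
    thus "max 0 (b * p s - c) - max 0 (a * p s - c) = 0" by simp
  qed
  have split: "(\<Sum>s<D. max 0 (b * p s - c) - max 0 (a * p s - c))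
      = (\<Sum>s\<in>S. max 0 (b * p s - c) - max 0 (a * p s - c))"
    using zero SD by (intro sum.mono_neutral_right) auto
  have pS: "(\<Sum>s\<in>S. p s) \<le> 1"
  proof -
    have "(\<Sum>s\<in>S. p s) \<le> (\<Sum>s<D. p s)" using SD pnn by (intro sum_mono2) auto
    thus ?thesis using psum by simp
  qed
  have main: "(\<Sum>s\<in>S. max 0 (b * p s - c) - max 0 (a * p s - c)) \<le> max 0 (b - c) - max 0 (a - c)"
  proof (cases "S = {}")
    case True thus ?thesis using ab by (simp add: max_def)
  next
    case False
    then obtain s0 where s0: "s0 \<in> S" by auto
    have "b > c"
    proof -
      have "c < b * p s0" "p s0 \<le> 1" "0 < p s0" using s0 p_le1 ppos unfolding S_def by auto
      hence "0 < b" using c by (metis less_trans mult_pos_pos mult_neg_pos not_less_iff_gr_or_eq zero_less_mult_iff)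
      hence "b * p s0 \<le> b" using \<open>p s0 \<le> 1\<close> by (simp add: mult_left_le)
      thus ?thesis using \<open>c < b * p s0\<close> by simp
    qed
    show ?thesis
    proof (cases "c \<le> a")
      case True
      have "(\<Sum>s\<in>S. max 0 (b * p s - c) - max 0 (a * p s - c)) \<le> (\<Sum>s\<in>S. (b - a) * p s)"
      proof (intro sum_mono)
        fix s assume s: "s \<in> S"
        hence "c < b * p s" unfolding S_def by auto
        thus "max 0 (b * p s - c) - max 0 (a * p s - c) \<le> (b - a) * p s"
          by (simp add: max_def algebra_simps)
      qed
      also have "\<dots> = (b - a) * (\<Sum>s\<in>S. p s)" by (simp add: sum_distrib_left)
      also have "\<dots> \<le> (b - a) * 1" using pS ab by (intro mult_left_mono) auto
      finally show ?thesis using True \<open>b > c\<close> by (simp add: max_def)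
    next
      case False
      have "(\<Sum>s\<in>S. max 0 (b * p s - c) - max 0 (a * p s - c)) \<le> (\<Sum>s\<in>S. b * p s - c)"
      proof (intro sum_mono)
        fix s assume s: "s \<in> S"
        hence "c < b * p s" unfolding S_def by auto
        thus "max 0 (b * p s - c) - max 0 (a * p s - c) \<le> b * p s - c"
          by (simp add: max_def)
      qed
      also have "\<dots> = b * (\<Sum>s\<in>S. p s) - real (card S) * c" by (simp add: sum_subtractf sum_distrib_left)
      also have "\<dots> \<le> b * 1 - 1 * c"
      proof -
        have "b * (\<Sum>s\<in>S. p s) \<le> b * 1" using pS \<open>b > c\<close> c by (intro mult_left_mono) auto
        moreover have "1 \<le> real (card S)" using \<open>S \<noteq> {}\<close> finS
          by (simp add: Suc_leI card_gt_0_iff)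
        hence "1 * c \<le> real (card S) * c" using c by (intro mult_right_mono) auto
        ultimately show ?thesis by simp
      qed
      finally show ?thesis using False \<open>b > c\<close> by (simp add: max_def)
    qed
  qed
  show ?thesis using split main unfolding Delta_def by (simp add: sum_subtractf)
qed

lemma part_a:
  assumes tun: "L \<in> tunstall_trees D p" and L': "L' \<in> parsing_trees D" and cd: "card L' = card L"
    and w: "0 < \<omega>" "\<omega> < 1"
  shows "fdiv_unif (phi \<omega>) L P \<le> fdiv_unif (phi \<omega>) L' P"
proof -
  have invL: "tinv L" using tun tunstall_parsing inv_parsing by blast
  have invL': "tinv L'" using L' inv_parsing by blast
  define n where "n = card L"
  have npos: "0 < n" using invL unfolding tinv_def n_def by simp
  define c where "c = (1 - \<omega>) / (\<omega> * real n)"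
  have cpos: "0 < c" unfolding c_def using w npos by simp
  define K where "K = (min \<omega> (1 - \<omega>) - \<omega>) / real n"
  have rep: "\<And>A. card A = n \<Longrightarrow> fdiv_unif (phi \<omega>) A P = real n * K + \<omega> * (\<Sum>x\<in>A. max 0 (P x - c))"
  proof -
    fix A :: "nat list set" assume A: "card A = n"
    have "fdiv_unif (phi \<omega>) A P = (\<Sum>x\<in>A. K + \<omega> * max 0 (P x - c))"
      unfolding fdiv_unif_def A K_def c_def using phi_rep[of \<omega> "real n"] w npos by simp
    also have "\<dots> = real n * K + \<omega> * (\<Sum>x\<in>A. max 0 (P x - c))"
      using A by (simp add: sum.distrib sum_distrib_left)
    finally show "fdiv_unif (phi \<omega>) A P = real n * K + \<omega> * (\<Sum>x\<in>A. max 0 (P x - c))" .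
  qed
  have mL: "(\<Sum>x\<in>L. max 0 (P x - c)) = max 0 (1 - c) - (\<Sum>v\<in>internal L. Delta c (P v))"
    using invL unfolding tinv_def by blast
  have mL': "(\<Sum>x\<in>L'. max 0 (P x - c)) = max 0 (1 - c) - (\<Sum>v\<in>internal L'. Delta c (P v))"
    using invL' unfolding tinv_def by blast
  have cdI: "card (internal L') = card (internal L)"
  proof -
    have cL: "card L = 1 + (D - 1) * card (internal L)" using invL unfolding tinv_def by blast
    have cL': "card L' = 1 + (D - 1) * card (internal L')" using invL' unfolding tinv_def by blast
    have "1 + (D - 1) * card (internal L') = 1 + (D - 1) * card (internal L)"
      using cL cL' cd by metis

    hence "(D - 1) * card (internal L') = (D - 1) * card (internal L)" by simp
    moreover have "D - 1 \<noteq> 0" using D2 by simp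
    ultimately show ?thesis by simp
  qed

  obtain q where q1: "\<forall>v\<in>internal L. q \<le> P v" and q2: "\<forall>x\<in>L. pmin * q \<le> P x \<and> P x \<le> q"
    using tun_inv[OF tun] by blast
  have wordsI: "\<And>M v. tinv M \<Longrightarrow> v \<in> internal M \<Longrightarrow> set v \<subseteq> {..<D}"
  proof -
    fix M v assume "tinv M" "v \<in> internal M"
    have ws: "\<forall>x\<in>M. set x \<subseteq> {..<D}" using \<open>tinv M\<close> by (simp add: tinv_def)
    obtain x z where "x \<in> M" "x = v @ z" using \<open>v \<in> internal M\<close> unfolding internal_def spre_def by blast
    moreover have "set x \<subseteq> {..<D}" using ws calculation(1) by blast
    ultimately show "set v \<subseteq> {..<D}" by auto

  qed
  have cmp0: "(\<Sum>v\<in>internal L'. Delta c (max 0 (P v))) \<le> (\<Sum>v\<in>internal L. Delta c (max 0 (P v)))"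
  proof (rule sum_mono_compare[where h="\<lambda>x. Delta c (max 0 x)" and q=q])
    show "finite (internal L')" "finite (internal L)"
      using invL invL' finite_internal unfolding tinv_def by auto
    show "card (internal L') = card (internal L)" by (rule cdI)
    show "\<And>x y. x \<le> y \<Longrightarrow> Delta c (max 0 x) \<le> Delta c (max 0 y)"
      using Delta_mono cpos by simp
    show "\<forall>v\<in>internal L. q \<le> P v" by (rule q1)
    show "\<forall>v\<in>internal L' - internal L. P v \<le> q"
    proof
      fix v assume v: "v \<in> internal L' - internal L"
      have sv: "set v \<subseteq> {..<D}" using v wordsI invL' by blast
      then obtain x where x: "x \<in> L" "pre x v" using v invL unfolding tinv_def by blast
      then obtain z where z: "v = x @ z" unfolding pre_def by auto
      have "0 < P x" "P z \<le> 1" using P_bounds sv z by auto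
      hence "P v \<le> P x" using z by (simp add: word_prob_append mult_left_le)
      thus "P v \<le> q" using q2 x by force
    qed
  qed
  have cmp: "(\<Sum>v\<in>internal L'. Delta c (P v)) \<le> (\<Sum>v\<in>internal L. Delta c (P v))"
  proof -
    have "\<And>M. tinv M \<Longrightarrow> (\<Sum>v\<in>internal M. Delta c (max 0 (P v))) = (\<Sum>v\<in>internal M. Delta c (P v))"
    proof (intro sum.cong refl)
      fix M v assume "tinv M" "v \<in> internal M"
      hence "0 < P v" using wordsI P_bounds by blast
      thus "Delta c (max 0 (P v)) = Delta c (P v)" by simp
    qed
    thus ?thesis using cmp0 invL invL' by simp
  qed

  show ?thesis using rep[of L] rep[of L'] cd mL mL' cmp w unfolding n_def by simp
qed

end


lemma min_spread:
  fixes w A B E :: real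
  assumes "A \<le> B" "0 \<le> E"
  shows "min w (1 - (A - E)) + min w (1 - (B + E)) \<le> min w (1 - A) + min w (1 - B)"
  using assms by (auto simp: min_def)

lemma phi_spread:
  fixes \<omega> a b e :: real
  assumes "0 \<le> \<omega>" "a \<le> b" "0 \<le> e"
  shows "phi \<omega> a + phi \<omega> b \<le> phi \<omega> (a - e) + phi \<omega> (b + e)"
proof -
  have "\<omega> * a \<le> \<omega> * b" "0 \<le> \<omega> * e" using assms by (auto intro: mult_left_mono)
  from min_spread[OF this, of \<omega>] show ?thesis
    unfolding phi_def by (simp add: algebra_simps)
qed

lemma phi_convex:
  fixes \<omega> a b l :: real
  assumes "0 \<le> \<omega>" "0 \<le> l" "l \<le> 1"
  shows "phi \<omega> (l * a + (1 - l) * b) \<le> l * phi \<omega> a + (1 - l) * phi \<omega> b"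
proof -
  have e: "\<And>t. phi \<omega> t = min \<omega> (1 - \<omega>) + max (- \<omega>) (\<omega> * t - 1)"
    unfolding phi_def by (simp add: min_def max_def)
  have "max (- \<omega>) (\<omega> * (l * a + (1 - l) * b) - 1)
        \<le> l * max (- \<omega>) (\<omega> * a - 1) + (1 - l) * max (- \<omega>) (\<omega> * b - 1)"
  proof -
    have m1: "l * (- \<omega>) \<le> l * max (- \<omega>) (\<omega> * a - 1)" "l * (\<omega> * a - 1) \<le> l * max (- \<omega>) (\<omega> * a - 1)"
      by (meson assms(2) max.cobounded1 max.cobounded2 mult_left_mono)+
    have m2: "(1 - l) * (- \<omega>) \<le> (1 - l) * max (- \<omega>) (\<omega> * b - 1)"
      "(1 - l) * (\<omega> * b - 1) \<le> (1 - l) * max (- \<omega>) (\<omega> * b - 1)"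
      using assms(3) by (meson diff_ge_0_iff_ge max.cobounded1 max.cobounded2 mult_left_mono)+
    have "- \<omega> \<le> l * max (- \<omega>) (\<omega> * a - 1) + (1 - l) * max (- \<omega>) (\<omega> * b - 1)"
      using m1(1) m2(1) by (simp add: algebra_simps)
    moreover have "\<omega> * (l * a + (1 - l) * b) - 1 \<le> l * max (- \<omega>) (\<omega> * a - 1) + (1 - l) * max (- \<omega>) (\<omega> * b - 1)"
      using m1(2) m2(2) by (simp add: algebra_simps)
    ultimately show ?thesis by simp
  qed
  thus ?thesis unfolding e by (simp add: algebra_simps)
qed

lemma phi_upper:
  fixes \<omega> t :: real
  assumes "0 \<le> \<omega>" "\<omega> \<le> 1" "0 \<le> t"
  shows "phi \<omega> t \<le> 1 + t"
proof -
  have "\<omega> * t \<le> t" using assms by (simp add: mult_left_le_one_le)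
  thus ?thesis using assms unfolding phi_def by (auto simp: min_def)
qed

definition Fc :: "real \<Rightarrow> real \<Rightarrow> real \<Rightarrow> real" where
  "Fc \<omega> \<rho> x = x * phi \<omega> (\<rho> / (1 + (\<rho> - 1) * x)) + (1 - x) * phi \<omega> (1 / (1 + (\<rho> - 1) * x))"

lemma bound_c_alt: "bound_c \<omega> \<rho> = Sup (Fc \<omega> \<rho> ` {0..1})"
  unfolding bound_c_def Fc_def by simp

lemma Fc_bdd:
  assumes "0 < \<omega>" "\<omega> < 1" "1 < \<rho>"
  shows "bdd_above (Fc \<omega> \<rho> ` {0..1})"
proof (rule bdd_aboveI2)
  fix x :: real assume x: "x \<in> {0..1}"
  define d where "d = 1 + (\<rho> - 1) * x"
  have d1: "1 \<le> d" unfolding d_def using x assms by simp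
  have A: "0 \<le> \<rho> / d" "\<rho> / d \<le> \<rho>" using d1 assms by (auto simp: divide_le_eq)
  have B: "0 \<le> 1 / d" "1 / d \<le> 1" using d1 by auto
  have "x * phi \<omega> (\<rho> / d) \<le> x * (1 + \<rho>)"
    using phi_upper[of \<omega> "\<rho> / d"] A assms x by (intro mult_left_mono) auto
  moreover have "(1 - x) * phi \<omega> (1 / d) \<le> (1 - x) * (1 + \<rho>)"
    using phi_upper[of \<omega> "1 / d"] B assms x by (intro mult_left_mono) auto
  ultimately show "Fc \<omega> \<rho> x \<le> 1 + \<rho>" unfolding Fc_def d_def[symmetric] by (simp add: algebra_simps)
qed

lemma chord_c:
  fixes A :: "'a set" and P :: "'a \<Rightarrow> real"
  assumes fin: "finite A" and ne: "A \<noteq> {}" and b: "0 < \<beta>" and r: "1 < \<rho>"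
    and bnd: "\<forall>x\<in>A. \<beta> \<le> P x \<and> P x \<le> \<rho> * \<beta>" and s: "sum P A = 1"
    and w: "0 < \<omega>" "\<omega> < 1"
  shows "fdiv_unif (phi \<omega>) A P \<le> bound_c \<omega> \<rho>"
proof -
  define N where "N = real (card A)"
  have N: "0 < N" unfolding N_def using fin ne by (simp add: card_gt_0_iff)
  define l where "l x = (P x - \<beta>) / ((\<rho> - 1) * \<beta>)" for x
  have rb: "0 < (\<rho> - 1) * \<beta>" using r b by simp
  have l01: "\<And>x. x \<in> A \<Longrightarrow> 0 \<le> l x \<and> l x \<le> 1"
  proof -
    fix x assume x: "x \<in> A"
    have "P x - \<beta> \<le> 1 * ((\<rho> - 1) * \<beta>)" using bnd x by (simp add: algebra_simps)
    hence "(P x - \<beta>) / ((\<rho> - 1) * \<beta>) \<le> 1" using pos_divide_le_eq[OF rb] by blast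
    moreover have "0 \<le> (P x - \<beta>) / ((\<rho> - 1) * \<beta>)" using bnd x rb by simp
    ultimately show "0 \<le> l x \<and> l x \<le> 1" unfolding l_def by simp
  qed

  have le: "\<And>x. l x * ((\<rho> - 1) * \<beta>) = P x - \<beta>"
  proof -
    fix x
    have aux: "\<And>a c::real. c \<noteq> 0 \<Longrightarrow> a / c * c = a" by simp
    show "l x * ((\<rho> - 1) * \<beta>) = P x - \<beta>" unfolding l_def by (rule aux) (use r b in simp)
  qed
  have Pl: "\<And>x. P x * N = l x * (\<rho> * \<beta> * N) + (1 - l x) * (\<beta> * N)"
  proof -
    fix x
    note e = le[of x]
    have "l x * (\<rho> * \<beta> * N) + (1 - l x) * (\<beta> * N) = (l x * ((\<rho> - 1) * \<beta>) + \<beta>) * N"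
      by (simp add: algebra_simps)
    also have "\<dots> = P x * N" unfolding e by simp
    finally show "P x * N = l x * (\<rho> * \<beta> * N) + (1 - l x) * (\<beta> * N)" by simp
  qed

  define X where "X = (\<Sum>x\<in>A. l x) / N"
  have X01: "0 \<le> X" "X \<le> 1"
  proof -
    have "0 \<le> (\<Sum>x\<in>A. l x)" using l01 by (intro sum_nonneg) auto
    thus "0 \<le> X" unfolding X_def using N by simp
    have "(\<Sum>x\<in>A. l x) \<le> (\<Sum>x\<in>A. 1)" using l01 by (intro sum_mono) auto
    thus "X \<le> 1" unfolding X_def N_def using N N_def by simp
  qed
  have suml: "(\<Sum>x\<in>A. l x) * ((\<rho> - 1) * \<beta>) = 1 - N * \<beta>"
  proof -
    have "(\<Sum>x\<in>A. l x) * ((\<rho> - 1) * \<beta>) = (\<Sum>x\<in>A. l x * ((\<rho> - 1) * \<beta>))"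
      by (rule sum_distrib_right)
    also have "\<dots> = (\<Sum>x\<in>A. P x - \<beta>)" using le by simp
    also have "\<dots> = 1 - N * \<beta>" using s unfolding N_def by (simp add: sum_subtractf)
    finally show ?thesis .
  qed
  have XN: "X * N = (\<Sum>x\<in>A. l x)" unfolding X_def using N by simp
  have dX0: "(1 + (\<rho> - 1) * X) * (\<beta> * N) = 1"
  proof -
    have "(1 + (\<rho> - 1) * X) * (\<beta> * N) = \<beta> * N + (X * N) * ((\<rho> - 1) * \<beta>)"
      by (simp add: algebra_simps)
    also have "\<dots> = 1" unfolding XN suml by simp
    finally show ?thesis .
  qed
  have bNpos: "\<beta> * N \<noteq> 0" using b N by simp
  have dX: "1 + (\<rho> - 1) * X = 1 / (\<beta> * N)"
    using dX0 bNpos by (simp add: eq_divide_eq)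

  have bN: "\<beta> * N = 1 / (1 + (\<rho> - 1) * X)" using dX by simp
  have rbN: "\<rho> * \<beta> * N = \<rho> / (1 + (\<rho> - 1) * X)"
  proof -
    have "\<rho> * \<beta> * N = \<rho> * (\<beta> * N)" by (simp add: mult.assoc)
    also have "\<dots> = \<rho> / (1 + (\<rho> - 1) * X)" unfolding bN by simp
    finally show ?thesis .
  qed

  have "fdiv_unif (phi \<omega>) A P = (\<Sum>x\<in>A. 1 / N * phi \<omega> (P x * N))"
    unfolding fdiv_unif_def N_def by simp
  also have "\<dots> \<le> (\<Sum>x\<in>A. 1 / N * (l x * phi \<omega> (\<rho> * \<beta> * N) + (1 - l x) * phi \<omega> (\<beta> * N)))"
  proof (intro sum_mono mult_left_mono)
    fix x assume "x \<in> A"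
    thus "phi \<omega> (P x * N) \<le> l x * phi \<omega> (\<rho> * \<beta> * N) + (1 - l x) * phi \<omega> (\<beta> * N)"
      unfolding Pl using phi_convex l01 w by simp
  qed (use N in simp)
  also have "\<dots> = X * phi \<omega> (\<rho> * \<beta> * N) + (1 - X) * phi \<omega> (\<beta> * N)"
  proof -
    define A1 where "A1 = phi \<omega> (\<rho> * \<beta> * N)"
    define B1 where "B1 = phi \<omega> (\<beta> * N)"
    have pw: "\<And>x. 1 / N * (l x * A1 + (1 - l x) * B1) = (A1 - B1) / N * l x + B1 / N"
      using N by (simp add: field_simps)
    have "(\<Sum>x\<in>A. 1 / N * (l x * A1 + (1 - l x) * B1)) = (\<Sum>x\<in>A. (A1 - B1) / N * l x + B1 / N)"
      unfolding pw ..
    also have "\<dots> = (A1 - B1) / N * (\<Sum>x\<in>A. l x) + real (card A) * (B1 / N)"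
      by (simp add: sum.distrib sum_distrib_left)
    also have "\<dots> = (A1 - B1) * X + B1" unfolding X_def using N unfolding N_def by simp
    finally show ?thesis unfolding A1_def[symmetric] B1_def[symmetric] by (simp add: algebra_simps)
  qed

  also have "\<dots> = Fc \<omega> \<rho> X" unfolding Fc_def rbN bN by simp
  also have "\<dots> \<le> bound_c \<omega> \<rho>" unfolding bound_c_alt
    using X01 Fc_bdd[OF w r] by (intro cSup_upper) auto
  finally show ?thesis .
qed


lemma sum_Q:
  fixes g :: "real \<Rightarrow> real"
  assumes ib: "i_beta \<rho> n \<beta> = k" and kn: "k \<le> n"
  shows "(\<Sum>j\<in>{1..n}. g (Q_beta \<rho> n \<beta> j)) = real k * g (\<rho> * \<beta>)
     + (if k < n then g (1 - (real n + real k * (\<rho> - 1) - 1) * \<beta>) + real (n - k - 1) * g \<beta> else 0)"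
proof -
  have split: "{1..n} = {1..k} \<union> {k<..n}" using kn by auto
  have s1: "(\<Sum>j\<in>{1..k}. g (Q_beta \<rho> n \<beta> j)) = real k * g (\<rho> * \<beta>)"
    unfolding Q_beta_def Let_def ib by simp
  have s2: "(\<Sum>j\<in>{k<..n}. g (Q_beta \<rho> n \<beta> j)) =
      (if k < n then g (1 - (real n + real k * (\<rho> - 1) - 1) * \<beta>) + real (n - k - 1) * g \<beta> else 0)"
  proof (cases "k < n")
    case True
    have e: "{k<..n} = insert (k + 1) {k + 1<..n}" using True by auto
    have "(\<Sum>j\<in>{k + 1<..n}. g (Q_beta \<rho> n \<beta> j)) = (\<Sum>j\<in>{k + 1<..n}. g \<beta>)"
      unfolding Q_beta_def Let_def ib by (intro sum.cong) auto
    also have "\<dots> = real (n - k - 1) * g \<beta>" by simp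
    finally show ?thesis using True unfolding e
      by (simp add: Q_beta_def Let_def ib)
  next
    case False thus ?thesis using kn by simp
  qed
  have "(\<Sum>j\<in>{1..n}. g (Q_beta \<rho> n \<beta> j)) = (\<Sum>j\<in>{1..k}. g (Q_beta \<rho> n \<beta> j)) + (\<Sum>j\<in>{k<..n}. g (Q_beta \<rho> n \<beta> j))"
    unfolding split by (rule sum.union_disjoint) auto
  thus ?thesis using s1 s2 by simp
qed

lemma i_beta_eq:
  assumes "0 < \<beta>" "1 < \<rho>" "real k * ((\<rho> - 1) * \<beta>) \<le> 1 - real n * \<beta>" "1 - real n * \<beta> < (real k + 1) * ((\<rho> - 1) * \<beta>)"
  shows "i_beta \<rho> n \<beta> = k"
proof -
  have pos: "0 < (\<rho> - 1) * \<beta>" using assms by simp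
  have "\<lfloor>(1 - real n * \<beta>) / ((\<rho> - 1) * \<beta>)\<rfloor> = int k"
    unfolding floor_eq_iff using assms pos by (simp add: field_simps)
  thus ?thesis unfolding i_beta_def by simp
qed

lemma smooth_base:
  fixes g :: "real \<Rightarrow> real" and A :: "'a set" and P :: "'a \<Rightarrow> real"
  assumes fin: "finite A" and b: "0 < \<beta>" and r: "1 < \<rho>"
    and bnd: "\<forall>x\<in>A. \<beta> \<le> P x \<and> P x \<le> \<rho> * \<beta>" and s: "sum P A = 1"
    and M1: "card {x\<in>A. \<beta> < P x \<and> P x < \<rho> * \<beta>} \<le> 1"
  shows "(\<Sum>x\<in>A. g (P x)) = (\<Sum>j\<in>{1..card A}. g (Q_beta \<rho> (card A) \<beta> j))"
proof -
  define n where "n = card A"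
  define K where "K = {x\<in>A. P x = \<rho> * \<beta>}"
  define B where "B = {x\<in>A. P x = \<beta>}"
  define M where "M = {x\<in>A. \<beta> < P x \<and> P x < \<rho> * \<beta>}"
  define k where "k = card K"
  have rb: "\<beta> < \<rho> * \<beta>" using b r by simp
  have AU: "A = K \<union> B \<union> M" unfolding K_def B_def M_def using bnd by force
  have d1: "K \<inter> B = {}" "(K \<union> B) \<inter> M = {}" unfolding K_def B_def M_def using rb by auto
  have fK: "finite K" "finite B" "finite M" unfolding K_def B_def M_def using fin by auto
  have sumsplit: "\<And>f :: 'a \<Rightarrow> real. sum f A = sum f K + sum f B + sum f M"
    using AU d1 fK by (simp add: sum.union_disjoint)
  have cardA: "n = k + card B + card M" unfolding n_def k_def using AU d1 fK
    by (simp add: card_Un_disjoint)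
  have sK: "\<And>f. (\<Sum>x\<in>K. f (P x)) = real k * f (\<rho> * \<beta>)" unfolding k_def K_def by simp
  have sB: "\<And>f. (\<Sum>x\<in>B. f (P x)) = real (card B) * f \<beta>" unfolding B_def by simp
  have M01: "M = {} \<or> (\<exists>m. M = {m})" using M1 fK(3) unfolding M_def[symmetric]
    by (metis card_0_eq card_1_singletonE le_Suc_eq One_nat_def le_zero_eq)
  show ?thesis
  proof (cases "M = {}")
    case True
    have cB: "card B = n - k" using cardA True by simp
    have kn: "k \<le> n" using cardA by simp
    have one: "1 = real k * (\<rho> * \<beta>) + real (n - k) * \<beta>"
      using s sumsplit[of P] sK[of id] sB[of id] True cB by simp
    have ib: "i_beta \<rho> n \<beta> = k"
      using one kn b r by (intro i_beta_eq) (auto simp: of_nat_diff algebra_simps)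
    have lhs: "(\<Sum>x\<in>A. g (P x)) = real k * g (\<rho> * \<beta>) + real (n - k) * g \<beta>"
      using sumsplit[of "\<lambda>x. g (P x)"] sK sB True cB by simp
    have mid: "k < n \<Longrightarrow> 1 - (real n + real k * (\<rho> - 1) - 1) * \<beta> = \<beta>"
      using one kn by (simp add: of_nat_diff algebra_simps)
    show ?thesis
    proof (cases "k < n")
      case True
      have "(\<Sum>j\<in>{1..n}. g (Q_beta \<rho> n \<beta> j)) = real k * g (\<rho> * \<beta>) + (g \<beta> + real (n - k - 1) * g \<beta>)"
        unfolding sum_Q[OF ib kn] mid[OF True] using True by simp
      also have "\<dots> = real k * g (\<rho> * \<beta>) + real (n - k) * g \<beta>"
        using True by (simp add: of_nat_diff algebra_simps)
      finally show ?thesis unfolding n_def[symmetric] lhs by simp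
    next
      case False
      hence "k = n" using kn by simp
      thus ?thesis unfolding n_def[symmetric] sum_Q[OF ib kn] lhs by simp
    qed
  next
    case False
    then obtain m where Mm: "M = {m}" using M01 by blast
    have cB: "card B = n - k - 1" using cardA Mm by simp
    have kn: "k < n" using cardA Mm by simp
    have mM: "\<beta> < P m" "P m < \<rho> * \<beta>" using Mm unfolding M_def by auto
    have one: "1 = real k * (\<rho> * \<beta>) + real (n - k - 1) * \<beta> + P m"
      using s sumsplit[of P] sK[of id] sB[of id] Mm cB by simp
    have e1: "real (n - k - 1) = real n - real k - 1" using kn by (simp add: of_nat_diff)
    have ib: "i_beta \<rho> n \<beta> = k"
      using one kn b r mM e1 by (intro i_beta_eq) (auto simp: algebra_simps)
    have lhs: "(\<Sum>x\<in>A. g (P x)) = real k * g (\<rho> * \<beta>) + real (n - k - 1) * g \<beta> + g (P m)"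
      using sumsplit[of "\<lambda>x. g (P x)"] sK sB Mm cB by simp
    have mid: "1 - (real n + real k * (\<rho> - 1) - 1) * \<beta> = P m"
      using one e1 by (simp add: algebra_simps)
    show ?thesis unfolding n_def[symmetric] sum_Q[OF ib less_imp_le[OF kn]] lhs
      using mid kn by simp
  qed
qed

lemma smooth:
  fixes g :: "real \<Rightarrow> real" and A :: "'a set" and P :: "'a \<Rightarrow> real"
  assumes spread: "\<And>x y d. x \<le> y \<Longrightarrow> 0 \<le> d \<Longrightarrow> g x + g y \<le> g (x - d) + g (y + d)"
    and fin: "finite A" and b: "0 < \<beta>" and r: "1 < \<rho>"
    and bnd: "\<forall>x\<in>A. \<beta> \<le> P x \<and> P x \<le> \<rho> * \<beta>" and s: "sum P A = 1"
  shows "(\<Sum>x\<in>A. g (P x)) \<le> (\<Sum>j\<in>{1..card A}. g (Q_beta \<rho> (card A) \<beta> j))"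
proof -
  have "\<forall>P. (\<forall>x\<in>A. \<beta> \<le> P x \<and> P x \<le> \<rho> * \<beta>) \<longrightarrow> sum P A = 1 \<longrightarrow>
          card {x\<in>A. \<beta> < P x \<and> P x < \<rho> * \<beta>} = m \<longrightarrow>
          (\<Sum>x\<in>A. g (P x)) \<le> (\<Sum>j\<in>{1..card A}. g (Q_beta \<rho> (card A) \<beta> j))" for m
  proof (induction m rule: less_induct)
    case (less m)
    show ?case
    proof (intro allI impI)
      fix P :: "'a \<Rightarrow> real"
      assume bnd: "\<forall>x\<in>A. \<beta> \<le> P x \<and> P x \<le> \<rho> * \<beta>" and s: "sum P A = 1"
        and cm: "card {x\<in>A. \<beta> < P x \<and> P x < \<rho> * \<beta>} = m"
      define M where "M = {x\<in>A. \<beta> < P x \<and> P x < \<rho> * \<beta>}"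
      have fM: "finite M" unfolding M_def using fin by simp
      show "(\<Sum>x\<in>A. g (P x)) \<le> (\<Sum>j\<in>{1..card A}. g (Q_beta \<rho> (card A) \<beta> j))"
      proof (cases "m \<le> 1")
        case True
        thus ?thesis using smooth_base[OF fin b r bnd s] cm by simp
      next
        case False
        hence "1 < card M" using cm unfolding M_def by simp
        hence "\<not> (\<forall>a\<in>M. \<forall>b\<in>M. a = b)" using card_le_Suc0_iff_eq[OF fM] by simp
        then obtain a0 b0 where ab0: "a0 \<in> M" "b0 \<in> M" "a0 \<noteq> b0" by blast

        obtain a b' where ab: "a \<in> M" "b' \<in> M" "a \<noteq> b'" "P a \<le> P b'"
        proof (cases "P a0 \<le> P b0")
          case True thus ?thesis using that ab0 by blast
        next
          case False thus ?thesis using that[of b0 a0] ab0 by auto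
        qed
        have aA: "a \<in> A" "b' \<in> A" using ab unfolding M_def by auto
        have ia: "\<beta> < P a" "P a < \<rho> * \<beta>" "\<beta> < P b'" "P b' < \<rho> * \<beta>" using ab unfolding M_def by auto
        define d where "d = min (P a - \<beta>) (\<rho> * \<beta> - P b')"
        have dpos: "0 < d" unfolding d_def using ia by simp
        define P' where "P' x = (if x = a then P a - d else if x = b' then P b' + d else P x)" for x
        have bnd': "\<forall>x\<in>A. \<beta> \<le> P' x \<and> P' x \<le> \<rho> * \<beta>"
          using bnd ia dpos unfolding P'_def d_def by (auto simp: min_def)
        have P'eq: "P' x = P x + (if x = a then - d else 0) + (if x = b' then d else 0)" for x
          unfolding P'_def using ab(3) by auto
        have s': "sum P' A = 1"
          unfolding P'eq using s fin aA by (simp add: sum.distrib)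
        have gsum: "\<And>Q :: 'a \<Rightarrow> real. (\<Sum>x\<in>A. g (Q x)) = g (Q a) + g (Q b') + (\<Sum>x\<in>A - {a} - {b'}. g (Q x))"
        proof -
          fix Q :: "'a \<Rightarrow> real"
          have "(\<Sum>x\<in>A. g (Q x)) = g (Q a) + (\<Sum>x\<in>A - {a}. g (Q x))" using fin aA by (simp add: sum.remove)
          also have "(\<Sum>x\<in>A - {a}. g (Q x)) = g (Q b') + (\<Sum>x\<in>A - {a} - {b'}. g (Q x))"
            using fin aA ab(3) by (intro sum.remove) auto
          finally show "(\<Sum>x\<in>A. g (Q x)) = g (Q a) + g (Q b') + (\<Sum>x\<in>A - {a} - {b'}. g (Q x))" by simp
        qed
        have same: "(\<Sum>x\<in>A - {a} - {b'}. g (P' x)) = (\<Sum>x\<in>A - {a} - {b'}. g (P x))"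
          unfolding P'_def by (intro sum.cong) auto
        have le1: "(\<Sum>x\<in>A. g (P x)) \<le> (\<Sum>x\<in>A. g (P' x))"
        proof -
          have "g (P a) + g (P b') \<le> g (P a - d) + g (P b' + d)" using spread ab(4) dpos by simp
          moreover have "P' a = P a - d" "P' b' = P b' + d" unfolding P'_def using ab(3) by auto
          ultimately show ?thesis using gsum[of P] gsum[of P'] same by simp
        qed
        define M' where "M' = {x\<in>A. \<beta> < P' x \<and> P' x < \<rho> * \<beta>}"
        have sub: "M' \<subset> M"
        proof -
          have "M' \<subseteq> M" unfolding M'_def M_def P'_def using ia by auto
          moreover have "a \<notin> M' \<or> b' \<notin> M'"
          proof (cases "P a - \<beta> \<le> \<rho> * \<beta> - P b'")
            case True
            hence "P' a = \<beta>" unfolding P'_def d_def by (simp add: min_def)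
            thus ?thesis unfolding M'_def by auto
          next
            case False
            hence "P' b' = \<rho> * \<beta>" unfolding P'_def d_def using ab(3) by (simp add: min_def)
            thus ?thesis unfolding M'_def by auto
          qed
          ultimately show ?thesis using ab by auto
        qed
        have "card M' < m" using psubset_card_mono[OF fM sub] cm unfolding M_def by simp
        hence "(\<Sum>x\<in>A. g (P' x)) \<le> (\<Sum>j\<in>{1..card A}. g (Q_beta \<rho> (card A) \<beta> j))"
          using less.IH bnd' s' unfolding M'_def by blast
        thus ?thesis using le1 by simp
      qed
    qed
  qed
  thus ?thesis using bnd s by blast
qed


lemma Gamma_pos: assumes "1 \<le> n" "1 < \<rho>" "\<beta> \<in> Gamma n \<rho>" shows "0 < \<beta>"
proof -
  have "0 < 1 + (real n - 1) * \<rho>" using assms by (simp add: add_pos_nonneg)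
  hence "0 < 1 / (1 + (real n - 1) * \<rho>)" by simp
  moreover have "1 / (1 + (real n - 1) * \<rho>) \<le> \<beta>" using assms(3) unfolding Gamma_def by simp
  ultimately show ?thesis by linarith

qed

lemma Gamma_ne: assumes "1 \<le> n" "1 < \<rho>" shows "Gamma n \<rho> \<noteq> {}"
proof -
  have "real n \<le> 1 + (real n - 1) * \<rho>"
  proof -
    have "(real n - 1) * 1 \<le> (real n - 1) * \<rho>" using assms by (intro mult_left_mono) auto
    thus ?thesis by simp
  qed
  moreover have "0 < real n" using assms by simp
  ultimately have "1 / (1 + (real n - 1) * \<rho>) \<le> 1 / real n" by (intro divide_left_mono) auto
  thus ?thesis unfolding Gamma_def by auto
qed

lemma Q_props:
  assumes n: "1 \<le> n" and r: "1 < \<rho>" and bG: "\<beta> \<in> Gamma n \<rho>"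
  shows "\<forall>j\<in>{1..n}. \<beta> \<le> Q_beta \<rho> n \<beta> j \<and> Q_beta \<rho> n \<beta> j \<le> \<rho> * \<beta>"
    and "(\<Sum>j\<in>{1..n}. Q_beta \<rho> n \<beta> j) = 1"
proof -
  have b: "0 < \<beta>" using Gamma_pos assms by blast
  have rb: "0 < (\<rho> - 1) * \<beta>" using b r by simp
  define Y where "Y = (1 - real n * \<beta>) / ((\<rho> - 1) * \<beta>)"
  define i where "i = i_beta \<rho> n \<beta>"
  have up: "\<beta> \<le> 1 / real n" and lo: "1 / (1 + (real n - 1) * \<rho>) \<le> \<beta>" using bG unfolding Gamma_def by auto
  have "real n * \<beta> \<le> 1" using up n by (simp add: field_simps)
  hence Y0: "0 \<le> Y" unfolding Y_def using rb by simp
  have den: "0 < 1 + (real n - 1) * \<rho>" using n r by (simp add: add_pos_nonneg)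
  have "1 \<le> \<beta> * (1 + (real n - 1) * \<rho>)" using lo den by (simp add: divide_le_eq mult.commute)
  hence "1 - real n * \<beta> \<le> (real n - 1) * ((\<rho> - 1) * \<beta>)" by (simp add: algebra_simps)
  hence Yn: "Y \<le> real n - 1" unfolding Y_def using rb by (simp add: divide_le_eq)
  have iY: "real i \<le> Y" "Y < real i + 1"
    unfolding i_def i_beta_def Y_def[symmetric] using Y0 by linarith+
  have "real i \<le> real n - 1" using iY Yn by simp
  hence iN: "i < n" using n by linarith
  define mid where "mid = 1 - (real n + real i * (\<rho> - 1) - 1) * \<beta>"
  have aux: "\<And>a c::real. c \<noteq> 0 \<Longrightarrow> a / c * c = a" by simp
  have Yc: "Y * ((\<rho> - 1) * \<beta>) = 1 - real n * \<beta>" unfolding Y_def by (rule aux) (use r b in simp)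
  have midY: "mid = \<beta> + (Y - real i) * ((\<rho> - 1) * \<beta>)"
  proof -
    have "(Y - real i) * ((\<rho> - 1) * \<beta>) = Y * ((\<rho> - 1) * \<beta>) - real i * ((\<rho> - 1) * \<beta>)"
      by (rule left_diff_distrib)
    also have "\<dots> = 1 - real n * \<beta> - real i * ((\<rho> - 1) * \<beta>)" unfolding Yc ..
    finally show ?thesis unfolding mid_def by (simp add: algebra_simps)
  qed

  have mid1: "\<beta> \<le> mid" using midY iY rb by simp
  have "(Y - real i) * ((\<rho> - 1) * \<beta>) \<le> 1 * ((\<rho> - 1) * \<beta>)" using iY rb by (intro mult_right_mono) auto
  hence mid2: "mid \<le> \<rho> * \<beta>" using midY by (simp add: algebra_simps)
  show "\<forall>j\<in>{1..n}. \<beta> \<le> Q_beta \<rho> n \<beta> j \<and> Q_beta \<rho> n \<beta> j \<le> \<rho> * \<beta>"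
    unfolding Q_beta_def Let_def i_def[symmetric] mid_def[symmetric] using mid1 mid2 rb b r by auto
  have "(\<Sum>j\<in>{1..n}. id (Q_beta \<rho> n \<beta> j)) = real i * id (\<rho> * \<beta>)
     + (if i < n then id (1 - (real n + real i * (\<rho> - 1) - 1) * \<beta>) + real (n - i - 1) * id \<beta> else 0)"
    using sum_Q[of \<rho> n \<beta> i id] i_def iN by simp
  also have "\<dots> = real i * (\<rho> * \<beta>) + mid + (real n - real i - 1) * \<beta>"
    using iN unfolding mid_def by (simp add: of_nat_diff)
  also have "\<dots> = 1" unfolding mid_def by (simp add: algebra_simps)
  finally show "(\<Sum>j\<in>{1..n}. Q_beta \<rho> n \<beta> j) = 1" by simp
qed

lemma Qfdiv_le_c:
  assumes n: "1 \<le> n" and r: "1 < \<rho>" and bG: "\<beta> \<in> Gamma n \<rho>" and w: "0 < \<omega>" "\<omega> < 1"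
  shows "fdiv_unif (phi \<omega>) {1..n} (Q_beta \<rho> n \<beta>) \<le> bound_c \<omega> \<rho>"
  using chord_c[of "{1..n}" \<beta> \<rho> "Q_beta \<rho> n \<beta>" \<omega>] Q_props[OF n r bG] Gamma_pos[OF n r bG] n r w by auto

lemma bound_b_bdd:
  assumes n: "1 \<le> n" and r: "1 < \<rho>" and w: "0 < \<omega>" "\<omega> < 1"
  shows "bdd_above ((\<lambda>\<beta>. fdiv_unif (phi \<omega>) {1..n} (Q_beta \<rho> n \<beta>)) ` Gamma n \<rho>)"
  using Qfdiv_le_c[OF n r _ w] by (intro bdd_aboveI2) auto

lemma bound_b_le_c:
  assumes n: "1 \<le> n" and r: "1 < \<rho>" and w: "0 < \<omega>" "\<omega> < 1"
  shows "bound_b \<omega> \<rho> n \<le> bound_c \<omega> \<rho>"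
  unfolding bound_b_def using Qfdiv_le_c[OF n r _ w] Gamma_ne[OF n r] by (intro cSup_least) auto

lemma Qfdiv_le_b:
  assumes n: "1 \<le> n" and r: "1 < \<rho>" and bG: "\<beta> \<in> Gamma n \<rho>" and w: "0 < \<omega>" "\<omega> < 1"
  shows "fdiv_unif (phi \<omega>) {1..n} (Q_beta \<rho> n \<beta>) \<le> bound_b \<omega> \<rho> n"
  unfolding bound_b_def using bound_b_bdd[OF n r w] bG by (intro cSup_upper) auto

lemma part_b_general:
  fixes A :: "'a set" and P :: "'a \<Rightarrow> real"
  assumes fin: "finite A" and ne: "A \<noteq> {}" and r: "1 < \<rho>"
    and bnd: "\<forall>x\<in>A. P x \<le> \<rho> * Min (P ` A)" and pos: "0 < Min (P ` A)" and s: "sum P A = 1"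
    and w: "0 < \<omega>" "\<omega> < 1"
  shows "fdiv_unif (phi \<omega>) A P \<le> bound_b \<omega> \<rho> (card A)"
proof -
  define n where "n = card A"
  define \<beta> where "\<beta> = Min (P ` A)"
  have n: "1 \<le> n" unfolding n_def using fin ne by (simp add: Suc_le_eq card_gt_0_iff)
  have bmin: "\<forall>x\<in>A. \<beta> \<le> P x" unfolding \<beta>_def using fin by auto
  obtain x0 where x0: "x0 \<in> A" "P x0 = \<beta>" unfolding \<beta>_def using fin ne
    by (metis (mono_tags, lifting) Min_in finite_imageI image_iff image_is_empty)
  have bnd': "\<forall>x\<in>A. \<beta> \<le> P x \<and> P x \<le> \<rho> * \<beta>" using bmin bnd unfolding \<beta>_def by auto
  have b: "0 < \<beta>" using pos unfolding \<beta>_def .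
  have bG: "\<beta> \<in> Gamma n \<rho>"
  proof -
    have "(\<Sum>x\<in>A. \<beta>) \<le> sum P A" using bmin by (intro sum_mono) auto
    hence "real n * \<beta> \<le> 1" using s unfolding n_def by simp
    hence u: "\<beta> \<le> 1 / real n" using n by (simp add: field_simps)
    have "sum P A = P x0 + sum P (A - {x0})" using fin x0 by (simp add: sum.remove)
    also have "sum P (A - {x0}) \<le> (\<Sum>x\<in>A - {x0}. \<rho> * \<beta>)" using bnd' by (intro sum_mono) auto
    also have "(\<Sum>x\<in>A - {x0}. \<rho> * \<beta>) = (real n - 1) * (\<rho> * \<beta>)"
      using fin x0 n unfolding n_def by (simp add: of_nat_diff)
    finally have "1 \<le> \<beta> * (1 + (real n - 1) * \<rho>)" using s x0 by (simp add: algebra_simps)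
    moreover have "0 < 1 + (real n - 1) * \<rho>" using n r by (simp add: add_pos_nonneg)
    ultimately have "1 / (1 + (real n - 1) * \<rho>) \<le> \<beta>" by (simp add: divide_le_eq mult.commute)
    thus ?thesis using u unfolding Gamma_def by simp
  qed
  define g where "g v = 1 / real n * phi \<omega> (v * real n)" for v
  have spread: "\<And>x y d. x \<le> y \<Longrightarrow> 0 \<le> d \<Longrightarrow> g x + g y \<le> g (x - d) + g (y + d)"
  proof -
    fix x y d :: real assume xy: "x \<le> y" "0 \<le> d"
    have "phi \<omega> (x * real n) + phi \<omega> (y * real n) \<le> phi \<omega> (x * real n - d * real n) + phi \<omega> (y * real n + d * real n)"
      using xy w by (intro phi_spread) (auto intro: mult_right_mono)
    hence "phi \<omega> (x * real n) + phi \<omega> (y * real n) \<le> phi \<omega> ((x - d) * real n) + phi \<omega> ((y + d) * real n)"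
      by (simp add: algebra_simps)
    thus "g x + g y \<le> g (x - d) + g (y + d)" unfolding g_def using n
      by (simp add: divide_right_mono add_divide_distrib[symmetric])
  qed
  have "fdiv_unif (phi \<omega>) A P = (\<Sum>x\<in>A. g (P x))" unfolding fdiv_unif_def g_def n_def by simp
  also have "\<dots> \<le> (\<Sum>j\<in>{1..card A}. g (Q_beta \<rho> (card A) \<beta> j))"
    by (rule smooth[OF spread fin b r bnd' s])
  also have "\<dots> = fdiv_unif (phi \<omega>) {1..n} (Q_beta \<rho> n \<beta>)" unfolding fdiv_unif_def g_def n_def by simp
  also have "\<dots> \<le> bound_b \<omega> \<rho> n" by (rule Qfdiv_le_b[OF n r bG w])
  finally show ?thesis unfolding n_def .
qed


lemma Q_special:
  assumes m: "1 \<le> m" and km: "k < m" and r: "1 < \<rho>" and w: "0 < \<omega>" "\<omega> < 1"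
  defines "\<beta> \<equiv> 1 / (real m + real k * (\<rho> - 1))"
  shows "\<beta> \<in> Gamma m \<rho>" and "fdiv_unif (phi \<omega>) {1..m} (Q_beta \<rho> m \<beta>) = Fc \<omega> \<rho> (real k / real m)"
proof -
  have mpos: "0 < real m" using m by simp
  have dpos: "0 < real m + real k * (\<rho> - 1)" using m r by (simp add: add_pos_nonneg)
  have b: "0 < \<beta>" unfolding \<beta>_def using dpos by simp
  have bd: "\<beta> * (real m + real k * (\<rho> - 1)) = 1" unfolding \<beta>_def using dpos by simp
  show "\<beta> \<in> Gamma m \<rho>"
  proof -
    have "real m \<le> real m + real k * (\<rho> - 1)" using r by simp
    hence u: "\<beta> \<le> 1 / real m" unfolding \<beta>_def using mpos by (intro divide_left_mono) auto
    have "real k \<le> real m - 1" using km by linarith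
    hence "real k * (\<rho> - 1) \<le> (real m - 1) * (\<rho> - 1)" using r by (intro mult_right_mono) auto
    hence "real m + real k * (\<rho> - 1) \<le> 1 + (real m - 1) * \<rho>" by (simp add: algebra_simps)
    hence "1 / (1 + (real m - 1) * \<rho>) \<le> \<beta>" unfolding \<beta>_def using dpos by (intro divide_left_mono) auto
    thus ?thesis using u unfolding Gamma_def by simp
  qed
  have rb: "0 < (\<rho> - 1) * \<beta>" using r b by simp
  have e1: "1 - real m * \<beta> = real k * ((\<rho> - 1) * \<beta>)" using bd by (simp add: algebra_simps)
  have ib: "i_beta \<rho> m \<beta> = k" using e1 rb b r by (intro i_beta_eq) (auto simp: algebra_simps)
  define g where "g v = 1 / real m * phi \<omega> (v * real m)" for v
  have mid: "1 - (real m + real k * (\<rho> - 1) - 1) * \<beta> = \<beta>" using bd by (simp add: algebra_simps)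
  have "fdiv_unif (phi \<omega>) {1..m} (Q_beta \<rho> m \<beta>) = (\<Sum>j\<in>{1..m}. g (Q_beta \<rho> m \<beta> j))"
    unfolding fdiv_unif_def g_def by simp
  also have "\<dots> = real k * g (\<rho> * \<beta>) + (g \<beta> + real (m - k - 1) * g \<beta>)"
    unfolding sum_Q[OF ib less_imp_le[OF km]] mid using km by simp
  also have "\<dots> = real k * g (\<rho> * \<beta>) + (real m - real k) * g \<beta>"
    using km by (simp add: of_nat_diff algebra_simps)
  also have "\<dots> = real k / real m * phi \<omega> (\<rho> * \<beta> * real m) + (1 - real k / real m) * phi \<omega> (\<beta> * real m)"
    unfolding g_def using mpos by (simp add: field_simps)
  also have "\<dots> = Fc \<omega> \<rho> (real k / real m)"
  proof -
    have bm: "\<beta> * real m = 1 / (1 + (\<rho> - 1) * (real k / real m))"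
      unfolding \<beta>_def using mpos dpos by (simp add: field_simps)
    have rbm: "\<rho> * \<beta> * real m = \<rho> / (1 + (\<rho> - 1) * (real k / real m))"
      using bm by (simp add: mult.assoc)
    show ?thesis unfolding Fc_def bm rbm ..
  qed
  finally show "fdiv_unif (phi \<omega>) {1..m} (Q_beta \<rho> m \<beta>) = Fc \<omega> \<rho> (real k / real m)" .
qed

lemma Fc_cont:
  assumes "0 \<le> x0" "1 < \<rho>"
  shows "isCont (Fc \<omega> \<rho>) x0"
proof -
  have "continuous (at x0) (\<lambda>x. Fc \<omega> \<rho> x)"
    unfolding Fc_def phi_def using assms
    by (intro continuous_intros) (auto simp: add_pos_nonneg intro!: less_imp_neq[symmetric])
  thus ?thesis by simp
qed

lemma bound_b_lim:
  assumes r: "1 < \<rho>" and w: "0 < \<omega>" "\<omega> < 1"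
  shows "(\<lambda>m. bound_b \<omega> \<rho> m) \<longlonglongrightarrow> bound_c \<omega> \<rho>"
proof (rule LIMSEQ_I)
  fix \<epsilon> :: real assume eps: "0 < \<epsilon>"
  have ne: "Fc \<omega> \<rho> ` {0..1} \<noteq> {}" by simp
  have "bound_c \<omega> \<rho> - \<epsilon> / 2 < Sup (Fc \<omega> \<rho> ` {0..1})" using eps bound_c_alt by simp
  then obtain x0 where x0: "x0 \<in> {0..1}" "bound_c \<omega> \<rho> - \<epsilon> / 2 < Fc \<omega> \<rho> x0"
    using less_cSup_iff[OF ne Fc_bdd[OF w r]] by auto
  define k where "k m = min (nat \<lfloor>x0 * real m\<rfloor>) (m - 1)" for m
  define xs where "xs m = real (k m) / real m" for m
  have bounds: "\<And>m. 1 \<le> m \<Longrightarrow> x0 - 1 / real m \<le> xs m \<and> xs m \<le> x0"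
  proof -
    fix m :: nat assume m: "1 \<le> m"
    have mpos: "0 < real m" using m by simp
    have y0: "0 \<le> x0 * real m" using x0 by simp
    have fl: "real (nat \<lfloor>x0 * real m\<rfloor>) = of_int \<lfloor>x0 * real m\<rfloor>" using y0 by simp
    have k1: "real (k m) \<le> x0 * real m"
    proof -
      have "real (k m) \<le> real (nat \<lfloor>x0 * real m\<rfloor>)" unfolding k_def by simp
      also have "\<dots> \<le> x0 * real m" unfolding fl by simp
      finally show ?thesis .
    qed
    have k2: "x0 * real m - 1 \<le> real (k m)"
    proof -
      have a: "x0 * real m - 1 \<le> real (nat \<lfloor>x0 * real m\<rfloor>)" unfolding fl by linarith
      have "x0 * real m \<le> 1 * real m" using x0 by (intro mult_right_mono) auto
      hence b: "x0 * real m - 1 \<le> real (m - 1)" using m by (simp add: of_nat_diff)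
      show ?thesis unfolding k_def using a b by (simp add: min_def)
    qed
    have "xs m \<le> x0" unfolding xs_def using k1 mpos by (simp add: divide_le_eq)
    moreover have "x0 - 1 / real m \<le> xs m"
    proof -
      have "x0 - 1 / real m = (x0 * real m - 1) / real m" using mpos by (simp add: field_simps)
      also have "\<dots> \<le> real (k m) / real m" using k2 mpos by (intro divide_right_mono) auto
      finally show ?thesis unfolding xs_def .
    qed

    ultimately show "x0 - 1 / real m \<le> xs m \<and> xs m \<le> x0" by simp
  qed
  have ev1: "eventually (\<lambda>m. 1 \<le> m) sequentially" by (rule eventually_ge_at_top)
  have conv: "xs \<longlonglongrightarrow> x0"
  proof (rule tendsto_sandwich[of "\<lambda>m. x0 - 1 / real m" xs sequentially "\<lambda>m. x0"])
    show "eventually (\<lambda>m. x0 - 1 / real m \<le> xs m) sequentially"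
      using ev1 by eventually_elim (use bounds in blast)
    show "eventually (\<lambda>m. xs m \<le> x0) sequentially"
      using ev1 by eventually_elim (use bounds in blast)
    show "(\<lambda>m. x0 - 1 / real m) \<longlonglongrightarrow> x0"
      using tendsto_diff[OF tendsto_const lim_1_over_n] by simp
  qed simp
  have "(\<lambda>m. Fc \<omega> \<rho> (xs m)) \<longlonglongrightarrow> Fc \<omega> \<rho> x0"
    using isCont_tendsto_compose[OF Fc_cont conv] x0 r by simp
  hence ev2: "eventually (\<lambda>m. bound_c \<omega> \<rho> - \<epsilon> < Fc \<omega> \<rho> (xs m)) sequentially"
    using x0 eps by (intro order_tendstoD(1)) auto
  have "eventually (\<lambda>m. norm (bound_b \<omega> \<rho> m - bound_c \<omega> \<rho>) < \<epsilon>) sequentially"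
    using ev1 ev2
  proof eventually_elim
    case (elim m)
    have km: "k m < m" unfolding k_def using elim(1) by simp
    define \<beta> where "\<beta> = 1 / (real m + real (k m) * (\<rho> - 1))"
    have "Fc \<omega> \<rho> (xs m) = fdiv_unif (phi \<omega>) {1..m} (Q_beta \<rho> m \<beta>)"
      unfolding xs_def \<beta>_def using Q_special(2)[OF elim(1) km r w] by simp
    also have "\<dots> \<le> bound_b \<omega> \<rho> m"
      using Qfdiv_le_b[OF elim(1) r _ w] Q_special(1)[OF elim(1) km r w] unfolding \<beta>_def by simp
    finally have "bound_c \<omega> \<rho> - \<epsilon> < bound_b \<omega> \<rho> m" using elim(2) by simp
    moreover have "bound_b \<omega> \<rho> m \<le> bound_c \<omega> \<rho>" using bound_b_le_c[OF elim(1) r w] .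
    ultimately show ?case using eps by simp
  qed
  thus "\<exists>no. \<forall>n\<ge>no. norm (bound_b \<omega> \<rho> n - bound_c \<omega> \<rho>) < \<epsilon>"
    unfolding eventually_sequentially .
qed


definition kf :: "real \<Rightarrow> real \<Rightarrow> real" where
  "kf t u = min u 1 - min (u + 1 - t) 1"

definition Gf :: "(real \<Rightarrow> real) \<Rightarrow> real \<Rightarrow> real \<Rightarrow> real" where
  "Gf f t u = kf t u * deriv f u - f (min u 1) + f (min u t)"

lemma min_deriv:
  fixes u c :: real assumes "u \<noteq> c"
  shows "((\<lambda>u. min u c) has_real_derivative (if u < c then 1 else 0)) (at u)"
proof (cases "u < c")
  case True
  have "((\<lambda>u. u) has_real_derivative 1) (at u)" by (rule DERIV_ident)
  hence "((\<lambda>u. min u c) has_real_derivative 1) (at u)"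
    by (rule has_field_derivative_transform_within_open[where S="{..<c}"]) (use True in auto)
  thus ?thesis using True by simp
next
  case False
  hence uc: "c < u" using assms by simp
  have "((\<lambda>u. c) has_real_derivative 0) (at u)" by (rule DERIV_const)
  hence "((\<lambda>u. min u c) has_real_derivative 0) (at u)"
    by (rule has_field_derivative_transform_within_open[where S="{c<..}"]) (use uc in auto)
  thus ?thesis using False by simp
qed

lemma phi_kf:
  fixes \<omega> t :: real assumes "0 < \<omega>"
  shows "phi \<omega> t = \<omega> * kf t ((1 - \<omega>) / \<omega>)"
proof -
  have u: "\<omega> * ((1 - \<omega>) / \<omega>) = 1 - \<omega>" using assms by simp
  have "\<omega> * min ((1 - \<omega>) / \<omega>) 1 = min (1 - \<omega>) \<omega>"
    using assms u by (simp add: min_mult_distrib_left)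
  moreover have "\<omega> * min ((1 - \<omega>) / \<omega> + 1 - t) 1 = min (1 - \<omega> * t) \<omega>"
  proof -
    have "\<omega> * ((1 - \<omega>) / \<omega> + 1 - t) = 1 - \<omega> * t" using u by (simp add: algebra_simps)
    thus ?thesis using assms by (simp add: min_mult_distrib_left)
  qed
  ultimately show ?thesis unfolding phi_def kf_def by (simp add: right_diff_distrib min.commute)
qed

locale fsm =
  fixes f :: "real \<Rightarrow> real"
  assumes fd: "\<forall>t>0. f differentiable (at t) \<and> deriv f differentiable (at t)"
begin

lemma df: "0 < x \<Longrightarrow> (f has_real_derivative deriv f x) (at x)"
  using fd DERIV_deriv_iff_real_differentiable by blast
lemma df1: "0 < x \<Longrightarrow> (deriv f has_real_derivative deriv (deriv f) x) (at x)"
  using fd DERIV_deriv_iff_real_differentiable by blast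

lemma Gderiv:
  assumes u: "0 < u" and t: "0 < t" and u1: "u \<noteq> 1" and ut: "u \<noteq> t"
  shows "((\<lambda>u. Gf f t u) has_real_derivative (kf t u * deriv (deriv f) u)) (at u)"
proof -
  have d1: "((\<lambda>u. min u 1) has_real_derivative (if u < 1 then 1 else 0)) (at u)"
    using min_deriv u1 by blast
  have d2: "((\<lambda>u. min (u + 1 - t) 1) has_real_derivative (if u + 1 - t < 1 then 1 else 0) * 1) (at u)"
  proof (rule DERIV_chain2[where f="\<lambda>v. min v 1"])
    show "((\<lambda>v. min v 1) has_real_derivative (if u + 1 - t < 1 then 1 else 0)) (at (u + 1 - t))"
      using min_deriv[of "u + 1 - t" 1] ut by simp
    show "((\<lambda>u. u + 1 - t) has_real_derivative 1) (at u)"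
      by (auto intro!: derivative_eq_intros)
  qed
  have dk: "((\<lambda>u. kf t u) has_real_derivative (if u < 1 then 1 else 0) - (if u + 1 - t < 1 then 1 else 0) * 1) (at u)"
    unfolding kf_def by (rule DERIV_diff[OF d1 d2])
  have dp: "((\<lambda>u. kf t u * deriv f u) has_real_derivative
      ((if u < 1 then 1 else 0) - (if u + 1 - t < 1 then 1 else 0) * 1) * deriv f u + deriv (deriv f) u * kf t u) (at u)"
    by (rule DERIV_mult[OF dk df1[OF u]])
  have m1: "0 < min u 1" "0 < min u t" using u t by auto
  have dfa: "((\<lambda>u. f (min u 1)) has_real_derivative deriv f (min u 1) * (if u < 1 then 1 else 0)) (at u)"
    by (rule DERIV_chain2[OF df[OF m1(1)] d1])
  have dfb: "((\<lambda>u. f (min u t)) has_real_derivative deriv f (min u t) * (if u < t then 1 else 0)) (at u)"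
    by (rule DERIV_chain2[OF df[OF m1(2)] min_deriv[OF ut]])
  have all: "((\<lambda>u. Gf f t u) has_real_derivative
      ((if u < 1 then 1 else 0) - (if u + 1 - t < 1 then 1 else 0) * 1) * deriv f u + deriv (deriv f) u * kf t u
      - deriv f (min u 1) * (if u < 1 then 1 else 0) + deriv f (min u t) * (if u < t then 1 else 0)) (at u)"
    unfolding Gf_def by (intro DERIV_add DERIV_diff dp dfa dfb)
  have eq: "((if u < 1 then 1 else 0) - (if u + 1 - t < 1 then 1 else 0) * 1) * deriv f u + deriv (deriv f) u * kf t u
      - deriv f (min u 1) * (if u < 1 then 1 else 0) + deriv f (min u t) * (if u < t then 1 else 0)
      = kf t u * deriv (deriv f) u"
    by (auto simp: min_def)
  show ?thesis using all unfolding eq .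
qed

lemma Gcont:
  assumes u: "0 < u" and t: "0 < t" shows "isCont (\<lambda>u. Gf f t u) u"
proof -
  have c1: "isCont (deriv f) u" using df1[OF u] DERIV_isCont by blast
  have cf: "\<And>x. 0 < x \<Longrightarrow> isCont f x" using df DERIV_isCont by blast
  have ca: "isCont (\<lambda>u. f (min u 1)) u"
    by (rule isCont_o2[where f="\<lambda>u. min u 1"]) (auto intro!: continuous_intros cf simp: u)
  have cb: "0 < t \<Longrightarrow> isCont (\<lambda>u. f (min u t)) u"
    by (rule isCont_o2[where f="\<lambda>u. min u t"]) (auto intro!: continuous_intros cf simp: u)
  show ?thesis unfolding Gf_def kf_def using cb[OF t] by (intro continuous_intros c1 ca)
qed

lemma integral_rep:
  fixes A :: "'a set" and P :: "'a \<Rightarrow> real"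
  assumes fin: "finite A" and ne: "A \<noteq> {}" and pos: "\<forall>x\<in>A. 0 < P x" and s: "sum P A = 1"
    and f1: "f 1 = 0"
  shows "((\<lambda>\<omega>. fdiv_unif (phi \<omega>) A P / \<omega> ^ 3 * deriv (deriv f) ((1 - \<omega>) / \<omega>))
          has_integral fdiv_unif f A P) {0..1}"
proof -
  define n where "n = real (card A)"
  have npos: "0 < n" unfolding n_def using fin ne by (simp add: card_gt_0_iff)
  define tt where "tt x = P x * n" for x
  have ttpos: "\<And>x. x \<in> A \<Longrightarrow> 0 < tt x" unfolding tt_def using pos npos by simp
  define T where "T = max 1 (Max (tt ` A))"
  define \<tau> where "\<tau> = min 1 (Min (tt ` A))"
  have T1: "1 \<le> T" unfolding T_def by simp
  have Tt: "\<And>x. x \<in> A \<Longrightarrow> tt x \<le> T" unfolding T_def using fin by (simp add: max.coboundedI2)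
  have \<tau>1: "\<tau> \<le> 1" unfolding \<tau>_def by simp
  have \<tau>t: "\<And>x. x \<in> A \<Longrightarrow> \<tau> \<le> tt x" unfolding \<tau>_def using fin by (simp add: min.coboundedI2)
  have \<tau>pos: "0 < \<tau>" unfolding \<tau>_def using fin ne ttpos by (simp add: Min_gr_iff)
  define a where "a = 1 / (1 + T)"
  define b where "b = 1 / (1 + \<tau>)"
  have apos: "0 < a" unfolding a_def using T1 by simp
  have ahalf: "a \<le> 1 / 2" unfolding a_def using T1 by (simp add: field_simps)
  have bhalf: "1 / 2 \<le> b" unfolding b_def using \<tau>1 \<tau>pos by (simp add: field_simps)
  have b1: "b < 1" unfolding b_def using \<tau>pos by simp
  have ab: "a \<le> b" using ahalf bhalf by simp
  define I where "I \<omega> = fdiv_unif (phi \<omega>) A P / \<omega> ^ 3 * deriv (deriv f) ((1 - \<omega>) / \<omega>)" for \<omega>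
  have fdphi: "\<And>\<omega>. fdiv_unif (phi \<omega>) A P = (\<Sum>x\<in>A. 1 / n * phi \<omega> (tt x))"
    unfolding fdiv_unif_def n_def tt_def by simp
  have Z1: "(I has_integral 0) {0..a}"
  proof (rule has_integral_is_0)
    fix \<omega> assume w: "\<omega> \<in> {0..a}"
    have "\<And>x. x \<in> A \<Longrightarrow> phi \<omega> (tt x) = 0"
    proof -
      fix x assume x: "x \<in> A"
      have "\<omega> * (1 + tt x) \<le> a * (1 + T)" using w Tt[OF x] ttpos[OF x] apos
        by (intro mult_mono) auto
      also have "\<dots> = 1" unfolding a_def using T1 by simp
      finally have "\<omega> \<le> 1 - \<omega> * tt x" by (simp add: algebra_simps)
      moreover have "\<omega> \<le> 1 - \<omega>" using w ahalf by simp
      ultimately show "phi \<omega> (tt x) = 0" unfolding phi_def by (simp add: min_absorb1)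
    qed
    thus "I \<omega> = 0" unfolding I_def fdphi by simp
  qed
  have Z2: "(I has_integral 0) {b..1}"
  proof (rule has_integral_is_0)
    fix \<omega> assume w: "\<omega> \<in> {b..1}"
    have bpos: "0 < b" using bhalf by simp
    have ph: "\<And>x. x \<in> A \<Longrightarrow> phi \<omega> (tt x) = \<omega> * tt x - \<omega>"
    proof -
      fix x assume x: "x \<in> A"
      have "b * (1 + \<tau>) \<le> \<omega> * (1 + tt x)" using w \<tau>t[OF x] \<tau>pos bpos
        by (intro mult_mono) auto
      moreover have "b * (1 + \<tau>) = 1" unfolding b_def using \<tau>pos by simp
      ultimately have "1 - \<omega> * tt x \<le> \<omega>" by (simp add: algebra_simps)
      moreover have "1 - \<omega> \<le> \<omega>" using w bhalf by simp
      ultimately show "phi \<omega> (tt x) = \<omega> * tt x - \<omega>" unfolding phi_def by (simp add: min_absorb2)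
    qed
    have "(\<Sum>x\<in>A. 1 / n * phi \<omega> (tt x)) = (\<Sum>x\<in>A. \<omega> * P x - \<omega> / n)"
      using ph npos by (intro sum.cong) (auto simp: tt_def field_simps)
    also have "\<dots> = \<omega> * sum P A - \<omega>" using npos unfolding n_def
      by (simp add: sum_subtractf sum_distrib_left)
    also have "\<dots> = 0" using s by simp
    finally show "I \<omega> = 0" unfolding I_def fdphi by simp
  qed
  define U where "U \<omega> = (1 - \<omega>) / \<omega>" for \<omega> :: real
  define \<Phi> where "\<Phi> \<omega> = - (1 / n) * (\<Sum>x\<in>A. Gf f (tt x) (U \<omega>))" for \<omega>
  define S where "S = insert (1 / 2) ((\<lambda>x. 1 / (1 + tt x)) ` A)"
  have finS: "finite S" unfolding S_def using fin by simp
  have Upos: "\<And>\<omega>. 0 < \<omega> \<Longrightarrow> \<omega> < 1 \<Longrightarrow> 0 < U \<omega>" unfolding U_def by simp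
  have dU: "\<And>\<omega>. 0 < \<omega> \<Longrightarrow> (U has_real_derivative (- 1 / \<omega> ^ 2)) (at \<omega>)"
  proof -
    fix \<omega> :: real assume w: "0 < \<omega>"
    have "((\<lambda>\<omega>. (1 - \<omega>) / \<omega>) has_real_derivative ((0 - 1) * \<omega> - (1 - \<omega>) * 1) / (\<omega> * \<omega>)) (at \<omega>)"
      by (intro DERIV_divide DERIV_diff DERIV_const DERIV_ident) (use w in simp)
    moreover have "((0 - 1) * \<omega> - (1 - \<omega>) * 1) / (\<omega> * \<omega>) = - 1 / \<omega> ^ 2"
      by (simp add: power2_eq_square)
    ultimately show "(U has_real_derivative (- 1 / \<omega> ^ 2)) (at \<omega>)" unfolding U_def by simp
  qed
  have FTC: "(I has_integral \<Phi> b - \<Phi> a) {a..b}"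
  proof (rule fundamental_theorem_of_calculus_interior_strong[OF finS ab])
    fix \<omega> assume w: "\<omega> \<in> {a<..<b} - S"
    have w0: "0 < \<omega>" "\<omega> < 1" using w apos b1 by auto
    have u0: "0 < U \<omega>" using Upos w0 by simp
    have u1: "U \<omega> \<noteq> 1"
    proof
      assume "U \<omega> = 1"
      hence "\<omega> = 1 / 2" unfolding U_def using w0 by (simp add: field_simps)
      thus False using w unfolding S_def by simp
    qed
    have ut: "\<And>x. x \<in> A \<Longrightarrow> U \<omega> \<noteq> tt x"
    proof
      fix x assume x: "x \<in> A" and e: "U \<omega> = tt x"
      hence "\<omega> = 1 / (1 + tt x)" unfolding U_def using w0 ttpos[OF x] by (simp add: field_simps)
      thus False using w x unfolding S_def by auto
    qed
    have dG: "\<And>x. x \<in> A \<Longrightarrow> ((\<lambda>\<omega>. Gf f (tt x) (U \<omega>)) has_real_derivative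
        kf (tt x) (U \<omega>) * deriv (deriv f) (U \<omega>) * (- 1 / \<omega> ^ 2)) (at \<omega>)"
    proof -
      fix x assume x: "x \<in> A"
      show "((\<lambda>\<omega>. Gf f (tt x) (U \<omega>)) has_real_derivative
        kf (tt x) (U \<omega>) * deriv (deriv f) (U \<omega>) * (- 1 / \<omega> ^ 2)) (at \<omega>)"
        using DERIV_chain2[OF Gderiv[OF u0 ttpos[OF x] u1 ut[OF x]] dU[OF w0(1)]] by simp
    qed

    have dPhi: "(\<Phi> has_real_derivative - (1 / n) * (\<Sum>x\<in>A. kf (tt x) (U \<omega>) * deriv (deriv f) (U \<omega>) * (- 1 / \<omega> ^ 2))) (at \<omega>)"
      unfolding \<Phi>_def by (intro DERIV_cmult DERIV_sum dG)
    have eq: "- (1 / n) * (\<Sum>x\<in>A. kf (tt x) (U \<omega>) * deriv (deriv f) (U \<omega>) * (- 1 / \<omega> ^ 2)) = I \<omega>"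
    proof -
      define K where "K = (\<Sum>x\<in>A. kf (tt x) (U \<omega>))"
      define F2 where "F2 = deriv (deriv f) (U \<omega>)"
      have l: "- (1 / n) * (\<Sum>x\<in>A. kf (tt x) (U \<omega>) * F2 * (- 1 / \<omega> ^ 2)) = K * F2 / (n * \<omega> ^ 2)"
      proof -
        have "(\<Sum>x\<in>A. kf (tt x) (U \<omega>) * F2 * (- 1 / \<omega> ^ 2)) = K * (F2 * (- 1 / \<omega> ^ 2))"
          unfolding K_def sum_distrib_right by (simp only: mult.assoc)
        thus ?thesis using npos w0 by (simp add: field_simps)
      qed

      have "fdiv_unif (phi \<omega>) A P = (\<Sum>x\<in>A. 1 / n * (\<omega> * kf (tt x) (U \<omega>)))"
        unfolding fdphi U_def using phi_kf[OF w0(1)] by simp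
      also have "\<dots> = \<omega> / n * K" unfolding K_def by (simp add: sum_distrib_left)
      finally have r: "I \<omega> = \<omega> / n * K / \<omega> ^ 3 * F2" unfolding I_def F2_def U_def by simp
      show ?thesis unfolding F2_def[symmetric] l r using w0 npos
        by (simp add: field_simps power3_eq_cube power2_eq_square)
    qed
    show "(\<Phi> has_vector_derivative I \<omega>) (at \<omega>)"
      using dPhi unfolding eq has_real_derivative_iff_has_vector_derivative .
  next
    show "continuous_on {a..b} \<Phi>"
    proof (rule continuous_at_imp_continuous_on, rule ballI)
      fix \<omega> assume w: "\<omega> \<in> {a..b}"
      have w0: "0 < \<omega>" "\<omega> < 1" using w apos b1 by auto
      have cU: "isCont U \<omega>" using dU[OF w0(1)] DERIV_isCont by blast
      have "\<And>x. x \<in> A \<Longrightarrow> isCont (\<lambda>\<omega>. Gf f (tt x) (U \<omega>)) \<omega>"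
        by (rule isCont_o2[OF cU Gcont[OF Upos[OF w0] ttpos]])
      thus "isCont \<Phi> \<omega>" unfolding \<Phi>_def by (intro continuous_intros) auto
    qed
  qed
  have Phib: "\<Phi> b = 0"
  proof -
    have Ub: "U b = \<tau>" unfolding U_def b_def using \<tau>pos by (simp add: field_simps)
    have "\<And>x. x \<in> A \<Longrightarrow> Gf f (tt x) (U b) = (tt x - 1) * deriv f \<tau>"
    proof -
      fix x assume x: "x \<in> A"
      have "kf (tt x) \<tau> = tt x - 1" unfolding kf_def using \<tau>1 \<tau>t[OF x] by (simp add: min_def)
      moreover have "min \<tau> 1 = \<tau>" "min \<tau> (tt x) = \<tau>" using \<tau>1 \<tau>t[OF x] by auto
      ultimately show "Gf f (tt x) (U b) = (tt x - 1) * deriv f \<tau>" unfolding Gf_def Ub by simp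
    qed
    hence "(\<Sum>x\<in>A. Gf f (tt x) (U b)) = (\<Sum>x\<in>A. tt x - 1) * deriv f \<tau>"
      by (simp add: sum_distrib_right)
    also have "(\<Sum>x\<in>A. tt x - 1) = 0" unfolding tt_def using s npos unfolding n_def
      by (simp add: sum_subtractf sum_distrib_right[symmetric])
    finally show ?thesis unfolding \<Phi>_def by simp
  qed
  have Phia: "\<Phi> a = - fdiv_unif f A P"
  proof -
    have Ua: "U a = T" unfolding U_def a_def using T1 by (simp add: field_simps)
    have "\<And>x. x \<in> A \<Longrightarrow> Gf f (tt x) (U a) = f (tt x)"
    proof -
      fix x assume x: "x \<in> A"
      have "kf (tt x) T = 0" unfolding kf_def using T1 Tt[OF x] by (simp add: min_def)
      moreover have "min T 1 = 1" "min T (tt x) = tt x" using T1 Tt[OF x] by auto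
      ultimately show "Gf f (tt x) (U a) = f (tt x)" unfolding Gf_def Ua using f1 by simp
    qed
    hence "(\<Sum>x\<in>A. Gf f (tt x) (U a)) = (\<Sum>x\<in>A. f (tt x))" by simp
    moreover have "fdiv_unif f A P = 1 / n * (\<Sum>x\<in>A. f (tt x))"
      unfolding fdiv_unif_def n_def tt_def by (simp add: sum_distrib_left)
    ultimately show ?thesis unfolding \<Phi>_def by simp
  qed
  have i1: "(I has_integral 0 + (\<Phi> b - \<Phi> a)) {0..b}"
    by (rule has_integral_combine[OF _ ab Z1 FTC]) (use apos in simp)
  have "0 \<le> b" "b \<le> 1" using ab apos b1 by auto
  from has_integral_combine[OF this i1 Z2]
  have "(I has_integral 0 + (\<Phi> b - \<Phi> a) + 0) {0..1}" .

  hence "(I has_integral fdiv_unif f A P) {0..1}" unfolding Phia Phib by simp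
  thus ?thesis unfolding I_def .
qed


end

theorem theorem14:
  fixes D n :: nat and p :: "nat \<Rightarrow> real" and L :: "nat list set" and \<rho> :: real
  assumes D2: "D \<ge> 2"
    and ppos: "\<forall>i<D. p i > 0"
    and psum: "(\<Sum>i<D. p i) = 1"
    and tun: "L \<in> tunstall_trees D p"
    and nL: "card L = n"
    and rho: "\<rho> = 1 / Min (p ` {..<D})"
  shows "(\<forall>\<omega>\<in>{0<..<1}.
            (\<forall>L'\<in>parsing_trees D. card L' = n \<longrightarrow>
                fdiv_unif (phi \<omega>) L (word_prob p) \<le> fdiv_unif (phi \<omega>) L' (word_prob p))
          \<and> fdiv_unif (phi \<omega>) L (word_prob p) \<le> bound_b \<omega> \<rho> n
          \<and> fdiv_unif (phi \<omega>) L (word_prob p) \<le> bound_c \<omega> \<rho>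
          \<and> (\<lambda>m. bound_b \<omega> \<rho> m) \<longlonglongrightarrow> bound_c \<omega> \<rho>)
       \<and> (\<forall>f :: real \<Rightarrow> real.
            convex_on {0<..} f
            \<and> (\<forall>t>0. f differentiable (at t) \<and> deriv f differentiable (at t))
            \<and> (\<exists>l. (f \<longlongrightarrow> l) (at_right 0))
            \<and> f 1 = 0
            \<longrightarrow> ((\<lambda>\<omega>. fdiv_unif (phi \<omega>) L (word_prob p) / \<omega> ^ 3
                       * deriv (deriv f) ((1 - \<omega>) / \<omega>))
                  has_integral fdiv_unif f L (word_prob p)) {0..1})"
proof -
  interpret src D p using D2 ppos psum by unfold_locales
  have rho': "\<rho> = 1 / pmin" unfolding rho pmin_def ..
  have r: "1 < \<rho>" unfolding rho' using pmin_props by simp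
  have invL: "tinv L" using tun tunstall_parsing inv_parsing by blast
  have finL: "finite L" and wordsL: "\<forall>x\<in>L. set x \<subseteq> {..<D}" and sL: "sum P L = 1"
    using invL by (simp_all add: tinv_def)
  have cL: "card L = 1 + (D - 1) * card (internal L)" using invL by (simp add: tinv_def)
  have neL: "L \<noteq> {}" using cL finL by auto
  have posL: "\<forall>x\<in>L. 0 < P x" using wordsL P_bounds by blast
  obtain q where q2: "\<forall>x\<in>L. pmin * q \<le> P x \<and> P x \<le> q" using tun_inv[OF tun] by blast
  define \<beta> where "\<beta> = Min (P ` L)"
  have bpos: "0 < \<beta>" unfolding \<beta>_def using finL neL posL by (simp add: Min_gr_iff)
  have bmin: "\<forall>x\<in>L. \<beta> \<le> P x" unfolding \<beta>_def using finL by simp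
  have bq: "pmin * q \<le> \<beta>" unfolding \<beta>_def using finL neL q2 by (simp add: Min_ge_iff)
  have bmax: "\<forall>x\<in>L. P x \<le> \<rho> * \<beta>"
  proof
    fix x assume x: "x \<in> L"
    have "P x \<le> q" using q2 x by blast
    also have "q = \<rho> * (pmin * q)" unfolding rho' using pmin_props by simp
    also have "\<dots> \<le> \<rho> * \<beta>" using bq r by (intro mult_left_mono) auto
    finally show "P x \<le> \<rho> * \<beta>" .
  qed
  have partA: "\<forall>\<omega>\<in>{0<..<1}.
            (\<forall>L'\<in>parsing_trees D. card L' = n \<longrightarrow>
                fdiv_unif (phi \<omega>) L (word_prob p) \<le> fdiv_unif (phi \<omega>) L' (word_prob p))
          \<and> fdiv_unif (phi \<omega>) L (word_prob p) \<le> bound_b \<omega> \<rho> n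
          \<and> fdiv_unif (phi \<omega>) L (word_prob p) \<le> bound_c \<omega> \<rho>
          \<and> (\<lambda>m. bound_b \<omega> \<rho> m) \<longlonglongrightarrow> bound_c \<omega> \<rho>"
  proof
    fix \<omega> :: real assume "\<omega> \<in> {0<..<1}"
    hence w: "0 < \<omega>" "\<omega> < 1" by auto
    have a: "\<forall>L'\<in>parsing_trees D. card L' = n \<longrightarrow>
                fdiv_unif (phi \<omega>) L (word_prob p) \<le> fdiv_unif (phi \<omega>) L' (word_prob p)"
      using part_a[OF tun _ _ w] nL by auto
    have b: "fdiv_unif (phi \<omega>) L (word_prob p) \<le> bound_b \<omega> \<rho> n"
      using part_b_general[OF finL neL r _ _ sL w] bmax bpos nL unfolding \<beta>_def by simp
    have c: "fdiv_unif (phi \<omega>) L (word_prob p) \<le> bound_c \<omega> \<rho>"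
      using chord_c[OF finL neL bpos r _ sL w] bmin bmax by simp
    show "(\<forall>L'\<in>parsing_trees D. card L' = n \<longrightarrow>
                fdiv_unif (phi \<omega>) L (word_prob p) \<le> fdiv_unif (phi \<omega>) L' (word_prob p))
          \<and> fdiv_unif (phi \<omega>) L (word_prob p) \<le> bound_b \<omega> \<rho> n
          \<and> fdiv_unif (phi \<omega>) L (word_prob p) \<le> bound_c \<omega> \<rho>
          \<and> (\<lambda>m. bound_b \<omega> \<rho> m) \<longlonglongrightarrow> bound_c \<omega> \<rho>"
      using a b c bound_b_lim[OF r w] by blast
  qed
  have partD: "\<forall>f :: real \<Rightarrow> real.
            convex_on {0<..} f
            \<and> (\<forall>t>0. f differentiable (at t) \<and> deriv f differentiable (at t))
            \<and> (\<exists>l. (f \<longlongrightarrow> l) (at_right 0))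
            \<and> f 1 = 0
            \<longrightarrow> ((\<lambda>\<omega>. fdiv_unif (phi \<omega>) L (word_prob p) / \<omega> ^ 3
                       * deriv (deriv f) ((1 - \<omega>) / \<omega>))
                  has_integral fdiv_unif f L (word_prob p)) {0..1}"
  proof (intro allI impI)
    fix f :: "real \<Rightarrow> real"
    assume hf: "convex_on {0<..} f
            \<and> (\<forall>t>0. f differentiable (at t) \<and> deriv f differentiable (at t))
            \<and> (\<exists>l. (f \<longlongrightarrow> l) (at_right 0))
            \<and> f 1 = 0"
    interpret fsm f using hf by unfold_locales blast
    show "((\<lambda>\<omega>. fdiv_unif (phi \<omega>) L (word_prob p) / \<omega> ^ 3
                       * deriv (deriv f) ((1 - \<omega>) / \<omega>))
                  has_integral fdiv_unif f L (word_prob p)) {0..1}"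
      using integral_rep[OF finL neL posL sL] hf by blast
  qed
  show ?thesis using partA partD by blast
qed

end
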